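(* Let $a,b\geq0$, $0\leq j\leq b$ and $n\geq b+1$ be integers. Then $\{H_{a+1+j}E_{b-j}\}_n$ equals the number of pairs $(\lambda,\mu)$ such that (1) $\lambda=(\lambda_1,\dotsc,\lambda_{b-j})$ with $\lambda_1\geq\cdots\geq\lambda_{b-j}\geq0$; (2) $\mu=(\mu_1,\dotsc,\mu_{n-b+j})$ with $\mu_1>\cdots>\mu_{n-b+j}\geq0$; (3) $\sum_i\lambda_i+\sum_i\mu_i=a+1+j$.
   Context: For $i\geq1$, $X_i(\sigma)$ is the number of $i$-cycles of $\sigma$. For a partition $\alpha=1^{a_1}2^{a_2}\cdots$ ($a_i$ = number of parts equal to $i$, $|\alpha|=\sum ia_i$, $l(\alpha)=\sum a_i$) let $\binom X\alpha=\prod_i\binom{X_i}{a_i}$ and $\left(\!\binom X\alpha\!\right)=\prod_i\binom{X_i+a_i-1}{a_i}$. Define $H_k=\sum_{\alpha\vdash k}\left(\!\binom X\alpha\!\right)$ and $E_l=\sum_{\alpha\vdash l}(-1)^{|\alpha|-l(\alpha)}\binom X\alpha$ ($H_0=E_0=1$). The signed moment of $p\in\mathbb C[X_1,X_2,\dotsc]$ is $\{p\}_n=\frac1{n!}\sum_{\sigma\in S_n}\mathrm{sgn}(\sigma)p(X_1(\sigma),X_2(\sigma),\dotsc)$. *)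

theory Defs
  imports "HOL-Combinatorics.Permutations" Complex_Main
begin

definition perm_orbit :: "(nat \<Rightarrow> nat) \<Rightarrow> nat \<Rightarrow> nat set" where
  "perm_orbit \<sigma> x = {(\<sigma> ^^ k) x | k. True}"

definition cyc_count :: "nat \<Rightarrow> (nat \<Rightarrow> nat) \<Rightarrow> nat \<Rightarrow> nat" where
  "cyc_count n \<sigma> i = card {C. \<exists>x\<in>{1..n}. C = perm_orbit \<sigma> x \<and> card C = i}"

text \<open>Partitions of k, encoded by multiplicity functions a (a i = number of parts equal to i).\<close>
definition partitions_mult :: "nat \<Rightarrow> (nat \<Rightarrow> nat) set" where
  "partitions_mult k = {a. (\<forall>i. (i = 0 \<or> k < i) \<longrightarrow> a i = 0) \<and> (\<Sum>i=1..k. i * a i) = k}"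

definition part_length :: "nat \<Rightarrow> (nat \<Rightarrow> nat) \<Rightarrow> nat" where
  "part_length k a = (\<Sum>i=1..k. a i)"

text \<open>H_k and E_l as functions of the cycle counts X :: nat => nat (X i = X_i).\<close>
definition H_poly :: "nat \<Rightarrow> (nat \<Rightarrow> nat) \<Rightarrow> real" where
  "H_poly k X = (\<Sum>a\<in>partitions_mult k. real (\<Prod>i=1..k. (X i + a i - 1) choose (a i)))"

definition E_poly :: "nat \<Rightarrow> (nat \<Rightarrow> nat) \<Rightarrow> real" where
  "E_poly l X = (\<Sum>a\<in>partitions_mult l.
      (-1) ^ (l - part_length l a) * real (\<Prod>i=1..l. (X i) choose (a i)))"

definition signed_moment :: "((nat \<Rightarrow> nat) \<Rightarrow> real) \<Rightarrow> nat \<Rightarrow> real" where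
  "signed_moment p n = (1 / fact n) *
     (\<Sum>\<sigma>\<in>{\<sigma>. \<sigma> permutes {1..n}}. real_of_int (sign \<sigma>) * p (cyc_count n \<sigma>))"

end

theory Submission
  imports Defs "HOL-Combinatorics.Orbits" "HOL-Combinatorics.Cycles"
begin


lemma sign_cycle_of_list:
  "distinct cs \<Longrightarrow> sign (cycle_of_list cs) = (-1) ^ (length cs - 1)"
proof (induction cs rule: cycle_of_list.induct)
  case (1 i j cs)
  have "sign (cycle_of_list (i # j # cs)) = sign (transpose i j) * sign (cycle_of_list (j # cs))"
    by (simp add: sign_compose permutation_swap_id permutation_of_cycle)
  also have "\<dots> = (-1) * (-1) ^ (length (j # cs) - 1)"
    using 1 by (simp add: sign_swap_id)
  finally have "sign (cycle_of_list (i # j # cs)) = (-1) ^ (length (i # j # cs) - 1)" by simp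
  then show ?case by (simp del: cycle_of_list.simps)
qed simp_all

lemma perm_orbit_eq_orbit: "permutation \<sigma> \<Longrightarrow> perm_orbit \<sigma> x = orbit \<sigma> x"
  by (simp add: perm_orbit_def orbit_altdef_permutation)

lemma perm_restrict_orbit_cycle:
  assumes "permutation p"
  shows "perm_restrict p (orbit p a) = cycle_of_list (support p a)"
proof
  fix b
  have set_eq: "set (support p a) = orbit p a"
    using support_set[OF assms] orbit_altdef_permutation[OF assms] by auto
  show "perm_restrict p (orbit p a) b = cycle_of_list (support p a) b"
  proof (cases "b \<in> orbit p a")
    case True
    then show ?thesis using cycle_restrict[OF assms, of b a] set_eq
      by (simp add: perm_restrict_simps)
  next
    case False
    then show ?thesis using id_outside_supp[of b "support p a"] set_eq
      by (simp add: perm_restrict_simps)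
  qed
qed

lemma sign_orbit_restrict:
  assumes "permutation p"
  shows "sign (perm_restrict p (orbit p a)) = (-1) ^ (card (orbit p a) - 1)"
proof -
  have set_eq: "set (support p a) = orbit p a"
    using support_set[OF assms] orbit_altdef_permutation[OF assms] by auto
  have d: "distinct (support p a)" using cycle_of_permutation[OF assms] .
  have "card (orbit p a) = length (support p a)"
    using distinct_card[OF d] set_eq by simp
  then show ?thesis
    using perm_restrict_orbit_cycle[OF assms] sign_cycle_of_list[OF d] by simp
qed

lemma orbit_perm_restrict:
  assumes "\<And>y. y \<in> F \<Longrightarrow> p y \<in> F" "x \<in> F"
  shows "orbit (perm_restrict p F) x = orbit p x"
proof -
  have "orbit p x = orbit (perm_restrict p F) x"
    by (rule orbit_cong0[OF assms(2)]) (auto simp: perm_restrict_simps assms(1))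
  then show ?thesis by simp
qed

lemma sign_orbits:
  assumes "finite T" "\<sigma> permutes T"
  shows "sign \<sigma> = (-1) ^ (\<Sum>c\<in>orbit \<sigma> ` T. card c - 1)"
  using assms
proof (induction "card T" arbitrary: T \<sigma> rule: less_induct)
  case less
  show ?case
  proof (cases "T = {}")
    case True
    then have "\<sigma> = id" using less.prems permutes_empty by auto
    then show ?thesis using True by simp
  next
    case False
    then obtain a where a: "a \<in> T" by auto
    define c where "c = orbit \<sigma> a"
    have perm: "permutation \<sigma>" using less.prems permutation_permutes by blast
    have cT: "c \<subseteq> T" unfolding c_def using permutes_orbit_subset[OF less.prems(2) a] .
    have ac: "a \<in> c" unfolding c_def using permutation_self_in_orbit[OF perm] .
    have cyc: "cyclic_on \<sigma> c" unfolding c_def using cyclic_on_orbit[OF less.prems(2,1)] .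
    define \<sigma>' where "\<sigma>' = perm_restrict \<sigma> (T - c)"
    have \<sigma>'perm: "\<sigma>' permutes (T - c)"
      unfolding \<sigma>'_def using perm_restrict_diff_cyclic[OF less.prems(2) cyc] .
    have decomp: "\<sigma> = \<sigma>' \<circ> perm_restrict \<sigma> c"
    proof -
      have "\<sigma>' \<circ> perm_restrict \<sigma> c = perm_restrict \<sigma> ((T - c) \<union> c)"
        unfolding \<sigma>'_def by (rule perm_restrict_comp) (auto simp: cyc)
      also have "(T - c) \<union> c = T" using cT by auto
      finally show ?thesis using perm_restrict_id[OF less.prems(2)] by (auto simp: fun_eq_iff)
    qed
    have lt: "card (T - c) < card T"
      by (rule psubset_card_mono) (use less.prems(1) a ac in auto)
    have IH: "sign \<sigma>' = (-1) ^ (\<Sum>d\<in>orbit \<sigma>' ` (T - c). card d - 1)"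
      using less.hyps[OF lt _ \<sigma>'perm] less.prems(1) by simp
    have closed: "\<sigma> y \<in> T - c" if y: "y \<in> T - c" for y
    proof -
      have "\<sigma> y \<in> T" using permutes_in_image[OF less.prems(2)] y by simp
      moreover have "\<sigma> y \<notin> c"
      proof
        assume "\<sigma> y \<in> c"
        then have "y \<in> c" by (rule cyclic_on_f_in[OF less.prems(2) cyc])
        then show False using y by simp
      qed
      ultimately show "\<sigma> y \<in> T - c" by simp
    qed
    have orbs: "orbit \<sigma>' ` (T - c) = orbit \<sigma> ` (T - c)"
      unfolding \<sigma>'_def by (rule image_cong[OF refl], rule orbit_perm_restrict[OF closed])
    have orbc: "orbit \<sigma> ` c = {c}"
    proof -
      have "orbit \<sigma> x = c" if "x \<in> c" for x
        using cyc that orbit_cyclic_eq3 by metis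
      then show ?thesis using ac by blast
    qed
    have orbsT: "orbit \<sigma> ` T = insert c (orbit \<sigma> ` (T - c))"
    proof -
      have "T = c \<union> (T - c)" using cT by blast
      then have "orbit \<sigma> ` T = orbit \<sigma> ` c \<union> orbit \<sigma> ` (T - c)" by (metis image_Un)
      then show ?thesis using orbc by simp
    qed
    have cnot: "c \<notin> orbit \<sigma> ` (T - c)"
    proof
      assume "c \<in> orbit \<sigma> ` (T - c)"
      then obtain x where "x \<in> T - c" "c = orbit \<sigma> x" by auto
      then show False using permutation_self_in_orbit[OF perm, of x] by auto
    qed
    have fin: "finite (orbit \<sigma> ` (T - c))"
      using less.prems(1) by simp
    have "sign \<sigma> = sign \<sigma>' * sign (perm_restrict \<sigma> c)"
    proof -
      have p1: "permutation \<sigma>'" using \<sigma>'perm less.prems(1) permutation_permutes by blast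
      have p2: "permutation (perm_restrict \<sigma> c)"
        unfolding c_def perm_restrict_orbit_cycle[OF perm] by (rule permutation_of_cycle)
      show ?thesis using sign_compose[OF p1 p2] decomp by simp
    qed
    also have "sign (perm_restrict \<sigma> c) = (-1) ^ (card c - 1)"
      unfolding c_def using sign_orbit_restrict[OF perm] .
    finally have "sign \<sigma> = (-1) ^ (\<Sum>d\<in>orbit \<sigma> ` (T - c). card d - 1) * (-1) ^ (card c - 1)"
      using IH orbs by simp
    also have "\<dots> = (-1) ^ (\<Sum>d\<in>insert c (orbit \<sigma> ` (T - c)). card d - 1)"
      using cnot fin by (simp add: power_add)
    finally show ?thesis using orbsT by simp
  qed
qed


lemma card_funs_sum_nat:
  assumes "finite B"
  shows "card {h \<in> B \<rightarrow>\<^sub>E (UNIV::nat set). sum h B = m} = (card B + m - 1) choose m"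
proof -
  have "bij_betw (\<lambda>M. restrict (count M) B) (multisets_of_size B m)
          {h \<in> B \<rightarrow>\<^sub>E (UNIV::nat set). sum h B = m}"
  proof (rule bij_betw_byWitness[where f' = "\<lambda>h. \<Sum>c\<in>B. replicate_mset (h c) c"])
    show "\<forall>M\<in>multisets_of_size B m. (\<Sum>c\<in>B. replicate_mset (restrict (count M) B c) c) = M"
    proof
      fix M assume M: "M \<in> multisets_of_size B m"
      show "(\<Sum>c\<in>B. replicate_mset (restrict (count M) B c) c) = M"
      proof (rule multiset_eqI)
        fix x
        have "count (\<Sum>c\<in>B. replicate_mset (restrict (count M) B c) c) x
              = (\<Sum>c\<in>B. if x = c then count M c else 0)"
          by (simp add: count_sum)
        also have "\<dots> = (if x \<in> B then count M x else 0)"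
          using assms by (simp add: sum.delta')
        also have "\<dots> = count M x"
          using M by (auto simp: multisets_of_size_def not_in_iff)
        finally show "count (\<Sum>c\<in>B. replicate_mset (restrict (count M) B c) c) x = count M x" .
      qed
    qed
    show "\<forall>h\<in>{h \<in> B \<rightarrow>\<^sub>E UNIV. sum h B = m}. restrict (count (\<Sum>c\<in>B. replicate_mset (h c) c)) B = h"
    proof
      fix h assume h: "h \<in> {h \<in> B \<rightarrow>\<^sub>E (UNIV::nat set). sum h B = m}"
      show "restrict (count (\<Sum>c\<in>B. replicate_mset (h c) c)) B = h"
      proof
        fix x
        show "restrict (count (\<Sum>c\<in>B. replicate_mset (h c) c)) B x = h x"
          using h assms by (auto simp: count_sum count_replicate_mset sum.delta PiE_def extensional_def)
      qed
    qed
    show "(\<lambda>M. restrict (count M) B) ` multisets_of_size B m \<subseteq> {h \<in> B \<rightarrow>\<^sub>E UNIV. sum h B = m}"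
    proof
      fix h assume "h \<in> (\<lambda>M. restrict (count M) B) ` multisets_of_size B m"
      then obtain M where M: "M \<in> multisets_of_size B m" and h: "h = restrict (count M) B" by auto
      have "sum h B = sum (count M) B" unfolding h by simp
      also have "\<dots> = sum (count M) (set_mset M)"
        using M assms by (intro sum.mono_neutral_right) (auto simp: multisets_of_size_def not_in_iff)
      also have "\<dots> = m" using M by (simp add: multisets_of_size_def size_multiset_overloaded_eq)
      finally show "h \<in> {h \<in> B \<rightarrow>\<^sub>E UNIV. sum h B = m}" unfolding h by simp
    qed
    show "(\<lambda>h. \<Sum>c\<in>B. replicate_mset (h c) c) ` {h \<in> B \<rightarrow>\<^sub>E UNIV. sum h B = m} \<subseteq> multisets_of_size B m"
    proof
      fix M assume "M \<in> (\<lambda>h. \<Sum>c\<in>B. replicate_mset (h c) c) ` {h \<in> B \<rightarrow>\<^sub>E (UNIV::nat set). sum h B = m}"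
      then obtain h :: "'a \<Rightarrow> nat" where h: "sum h B = m" and M: "M = (\<Sum>c\<in>B. replicate_mset (h c) c)" by auto
      have "x \<in> B" if "x \<in># M" for x
      proof -
        have "count M x = (\<Sum>c\<in>B. if x = c then h c else 0)" unfolding M by (simp add: count_sum)
        also have "\<dots> = (if x \<in> B then h x else 0)" using assms by (simp add: sum.delta')
        finally show ?thesis using that by (metis count_eq_zero_iff)
      qed
      moreover have "size M = m" unfolding M using h by (simp add: size_multiset_sum)
      ultimately show "M \<in> multisets_of_size B m" by (auto simp: multisets_of_size_def)
    qed
  qed
  then have "card (multisets_of_size B m) = card {h \<in> B \<rightarrow>\<^sub>E (UNIV::nat set). sum h B = m}"
    by (rule bij_betw_same_card)
  then show ?thesis using card_multisets_of_size[OF assms] by simp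
qed

lemma card_funs_sum_01:
  assumes "finite B"
  shows "card {h \<in> B \<rightarrow>\<^sub>E {0::nat,1}. sum h B = m} = card B choose m"
proof -
  have "bij_betw (\<lambda>S. restrict (\<lambda>c. if c \<in> S then 1 else 0) B) {S. S \<subseteq> B \<and> card S = m}
          {h \<in> B \<rightarrow>\<^sub>E {0::nat,1}. sum h B = m}"
  proof (rule bij_betw_byWitness[where f' = "\<lambda>h. {c\<in>B. h c = 1}"])
    show "\<forall>S\<in>{S. S \<subseteq> B \<and> card S = m}. {c \<in> B. restrict (\<lambda>c. if c \<in> S then 1 else 0) B c = (1::nat)} = S"
      by auto
    show "\<forall>h\<in>{h \<in> B \<rightarrow>\<^sub>E {0::nat,1}. sum h B = m}. restrict (\<lambda>c. if c \<in> {c \<in> B. h c = 1} then 1 else 0) B = h"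
      by (auto simp: fun_eq_iff PiE_def extensional_def Pi_def)
    show "(\<lambda>S. restrict (\<lambda>c. if c \<in> S then 1 else 0) B) ` {S. S \<subseteq> B \<and> card S = m}
        \<subseteq> {h \<in> B \<rightarrow>\<^sub>E {0::nat,1}. sum h B = m}"
    proof
      fix h :: "'a \<Rightarrow> nat" assume "h \<in> (\<lambda>S. restrict (\<lambda>c. if c \<in> S then 1 else 0) B) ` {S. S \<subseteq> B \<and> card S = m}"
      then obtain S where S: "S \<subseteq> B" "card S = m" and h: "h = restrict (\<lambda>c. if c \<in> S then 1 else (0::nat)) B" by auto
      have "sum h B = (\<Sum>c\<in>B. if c \<in> S then 1 else 0)" unfolding h by simp
      also have "\<dots> = card (B \<inter> S)" using assms by (simp add: sum.If_cases)
      also have "\<dots> = m" using S by (simp add: Int_absorb1)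
      finally show "h \<in> {h \<in> B \<rightarrow>\<^sub>E {0::nat,1}. sum h B = m}" unfolding h by auto
    qed
    show "(\<lambda>h. {c\<in>B. h c = 1}) ` {h \<in> B \<rightarrow>\<^sub>E {0::nat,1}. sum h B = m} \<subseteq> {S. S \<subseteq> B \<and> card S = m}"
    proof
      fix S assume "S \<in> (\<lambda>h. {c\<in>B. h c = 1}) ` {h \<in> B \<rightarrow>\<^sub>E {0::nat,1}. sum h B = m}"
      then obtain h where h: "h \<in> B \<rightarrow>\<^sub>E {0::nat,1}" "sum h B = m" and S: "S = {c\<in>B. h c = 1}" by auto
      have "sum h B = (\<Sum>c\<in>B. if h c = 1 then 1 else 0)"
        using h(1) by (intro sum.cong) (auto simp: PiE_def Pi_def)
      also have "\<dots> = card S" unfolding S using assms by (simp add: sum.If_cases Int_def)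
      finally show "S \<in> {S. S \<subseteq> B \<and> card S = m}" using h(2) S by auto
    qed
  qed
  then have "card {S. S \<subseteq> B \<and> card S = m} = card {h \<in> B \<rightarrow>\<^sub>E {0::nat,1}. sum h B = m}"
    by (rule bij_betw_same_card)
  then show ?thesis using n_subsets[OF assms] by simp
qed


lemma split_by_weight:
  fixes w :: "'a \<Rightarrow> nat" and f :: "'a \<Rightarrow> 'b::comm_monoid_add"
  assumes "finite D" "\<forall>c\<in>D. 1 \<le> w c" "\<forall>c\<in>D. k < w c \<longrightarrow> f c = 0"
  shows "sum f D = (\<Sum>i=1..k. sum f {c\<in>D. w c = i})"
proof -
  have nz: "f c = 0" if "c \<in> D - {c\<in>D. w c \<le> k}" for c
    using assms(3) that by auto
  have "sum f D = sum f {c\<in>D. w c \<le> k}"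
    by (rule sum.mono_neutral_right) (use assms(1) nz in auto)
  also have "\<dots> = (\<Sum>i\<in>{1..k}. sum f {c\<in>{c\<in>D. w c \<le> k}. w c = i})"
    by (rule sum.group[symmetric]) (use assms(1,2) in auto)
  also have "\<dots> = (\<Sum>i=1..k. sum f {c\<in>D. w c = i})"
  proof (rule sum.cong[OF refl])
    fix i assume "i \<in> {1..k}"
    then have "{c\<in>{c\<in>D. w c \<le> k}. w c = i} = {c\<in>D. w c = i}" by auto
    then show "sum f {c\<in>{c\<in>D. w c \<le> k}. w c = i} = sum f {c\<in>D. w c = i}" by simp
  qed
  finally show ?thesis .
qed

lemma partitions_multD:
  assumes "a \<in> partitions_mult k"
  shows "i = 0 \<or> k < i \<Longrightarrow> a i = 0" "(\<Sum>i=1..k. i * a i) = k"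
  using assms unfolding partitions_mult_def by auto

lemma finite_partitions_mult: "finite (partitions_mult k)"
proof -
  have "partitions_mult k \<subseteq> (\<lambda>f i. if i \<in> {1..k} then f i else 0) ` (PiE {1..k} (\<lambda>_. {0..k}))"
  proof
    fix a assume a: "a \<in> partitions_mult k"
    have le: "a i \<le> k" if i: "i \<in> {1..k}" for i
    proof -
      have "a i \<le> i * a i" using i by auto
      also have "\<dots> \<le> (\<Sum>i=1..k. i * a i)" by (rule member_le_sum) (use i in auto)
      also have "\<dots> = k" by (rule partitions_multD(2)[OF a])
      finally show ?thesis .
    qed
    have z: "a i = 0" if "i \<notin> {1..k}" for i
    proof -
      have "i = 0 \<or> k < i" using that by auto
      then show ?thesis by (rule partitions_multD(1)[OF a])
    qed
    have "a = (\<lambda>i. if i \<in> {1..k} then restrict a {1..k} i else 0)"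
      using z by (auto simp: fun_eq_iff)
    moreover have "restrict a {1..k} \<in> PiE {1..k} (\<lambda>_. {0..k})" using le by auto
    ultimately show "a \<in> (\<lambda>f i. if i \<in> {1..k} then f i else 0) ` (PiE {1..k} (\<lambda>_. {0..k}))"
      by (rule image_eqI)
  qed
  moreover have "finite (PiE {1..k} (\<lambda>_. {0..k::nat}))" by (intro finite_PiE) auto
  ultimately show ?thesis by (rule finite_subset[OF _ finite_imageI])
qed

context
  fixes D :: "'a set" and w :: "'a \<Rightarrow> nat" and V :: "nat set" and k :: nat
  assumes finD: "finite D" and wpos: "\<forall>c\<in>D. 1 \<le> w c" and V0: "0 \<in> V"
begin

definition "GS = {h \<in> D \<rightarrow>\<^sub>E V. (\<Sum>c\<in>D. w c * h c) = k}"
definition "cls h = (\<lambda>i. if 1 \<le> i \<and> i \<le> k then (\<Sum>c\<in>{c\<in>D. w c = i}. h c) else 0)"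

lemma GS_zero: assumes "h \<in> GS" "c \<in> D" "k < w c" shows "h c = 0"
proof (rule ccontr)
  assume "h c \<noteq> 0"
  then have "w c \<le> w c * h c" by simp
  also have "\<dots> \<le> (\<Sum>c\<in>D. w c * h c)" using assms finD by (intro member_le_sum) auto
  finally show False using assms by (simp add: GS_def)
qed

lemma GS_le: assumes "h \<in> GS" "c \<in> D" shows "h c \<le> k"
proof -
  have "h c \<le> w c * h c" using wpos assms by simp
  also have "\<dots> \<le> (\<Sum>c\<in>D. w c * h c)" using assms finD by (intro member_le_sum) auto
  finally show ?thesis using assms by (simp add: GS_def)
qed

lemma finite_GS: "finite GS"
proof -
  have "GS \<subseteq> D \<rightarrow>\<^sub>E {0..k}" using GS_le by (auto simp: GS_def PiE_def Pi_def)
  moreover have "finite (D \<rightarrow>\<^sub>E {0..k})" using finD by (intro finite_PiE) auto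
  ultimately show ?thesis using finite_subset by blast
qed

lemma GS_split: assumes "h \<in> GS" "\<forall>c\<in>D. h c = 0 \<longrightarrow> f c = 0"
  shows "sum f D = (\<Sum>i=1..k. sum f {c\<in>D. w c = i})"
  using split_by_weight[OF finD wpos] GS_zero[OF assms(1)] assms(2) by auto

lemma cls_in: assumes "h \<in> GS" shows "cls h \<in> partitions_mult k"
proof -
  have "(\<Sum>i=1..k. i * cls h i) = (\<Sum>i=1..k. \<Sum>c\<in>{c\<in>D. w c = i}. w c * h c)"
    by (intro sum.cong) (auto simp: cls_def sum_distrib_left)
  also have "\<dots> = (\<Sum>c\<in>D. w c * h c)"
    by (rule GS_split[OF assms, symmetric]) auto
  also have "\<dots> = k" using assms by (simp add: GS_def)
  finally show ?thesis by (auto simp: partitions_mult_def cls_def)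
qed

lemma sum_GS: assumes "h \<in> GS" shows "sum h D = part_length k (cls h)"
proof -
  have "sum h D = (\<Sum>i=1..k. sum h {c\<in>D. w c = i})"
    by (rule GS_split[OF assms]) auto
  also have "\<dots> = part_length k (cls h)"
    unfolding part_length_def by (intro sum.cong) (auto simp: cls_def)
  finally show ?thesis .
qed

lemma card_fiber:
  assumes a: "a \<in> partitions_mult k"
  shows "card {h \<in> GS. cls h = a} = (\<Prod>i=1..k. card {h \<in> {c\<in>D. w c = i} \<rightarrow>\<^sub>E V. sum h {c\<in>D. w c = i} = a i})"
proof -
  let ?Dc = "\<lambda>i. {c\<in>D. w c = i}"
  let ?T = "PiE {1..k} (\<lambda>i. {h \<in> ?Dc i \<rightarrow>\<^sub>E V. sum h (?Dc i) = a i})"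
  have a0: "a i = 0" if "i = 0 \<or> k < i" for i using a that by (auto simp: partitions_mult_def)
  have ak: "(\<Sum>i=1..k. i * a i) = k" using a by (auto simp: partitions_mult_def)
  have "bij_betw (\<lambda>h. \<lambda>i\<in>{1..k}. restrict h (?Dc i)) {h \<in> GS. cls h = a} ?T"
  proof (rule bij_betw_byWitness[where f' = "\<lambda>F. \<lambda>c\<in>D. if w c \<le> k then F (w c) c else 0"])
    show "\<forall>h\<in>{h \<in> GS. cls h = a}. (\<lambda>c\<in>D. if w c \<le> k then (\<lambda>i\<in>{1..k}. restrict h (?Dc i)) (w c) c else 0) = h"
    proof
      fix h assume h: "h \<in> {h \<in> GS. cls h = a}"
      show "(\<lambda>c\<in>D. if w c \<le> k then (\<lambda>i\<in>{1..k}. restrict h (?Dc i)) (w c) c else 0) = h"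
      proof
        fix c
        show "(\<lambda>c\<in>D. if w c \<le> k then (\<lambda>i\<in>{1..k}. restrict h (?Dc i)) (w c) c else 0) c = h c"
          using h GS_zero[of h c] wpos by (auto simp: GS_def PiE_def extensional_def)
      qed
    qed
    show "\<forall>F\<in>?T. (\<lambda>i\<in>{1..k}. restrict (\<lambda>c\<in>D. if w c \<le> k then F (w c) c else 0) (?Dc i)) = F"
    proof
      fix F assume F: "F \<in> ?T"
      show "(\<lambda>i\<in>{1..k}. restrict (\<lambda>c\<in>D. if w c \<le> k then F (w c) c else 0) (?Dc i)) = F"
      proof
        fix i
        show "(\<lambda>i\<in>{1..k}. restrict (\<lambda>c\<in>D. if w c \<le> k then F (w c) c else 0) (?Dc i)) i = F i"
        proof (cases "i \<in> {1..k}")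
          case True
          then have "F i \<in> ?Dc i \<rightarrow>\<^sub>E V" using F by auto
          then show ?thesis using True by (auto simp: fun_eq_iff PiE_def extensional_def)
        next
          case False
          then show ?thesis using F by (auto simp: PiE_def extensional_def)
        qed
      qed
    qed
    show "(\<lambda>h. \<lambda>i\<in>{1..k}. restrict h (?Dc i)) ` {h \<in> GS. cls h = a} \<subseteq> ?T"
    proof
      fix F assume "F \<in> (\<lambda>h. \<lambda>i\<in>{1..k}. restrict h (?Dc i)) ` {h \<in> GS. cls h = a}"
      then obtain h where h: "h \<in> GS" "cls h = a" and F: "F = (\<lambda>i\<in>{1..k}. restrict h (?Dc i))" by auto
      have "sum h (?Dc i) = a i" if "i \<in> {1..k}" for i
      proof -
        have "cls h i = a i" using h(2) by simp
        then show ?thesis using that by (simp add: cls_def)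
      qed
      then show "F \<in> ?T" unfolding F using h(1) by (auto simp: GS_def PiE_def Pi_def)
    qed
    show "(\<lambda>F. \<lambda>c\<in>D. if w c \<le> k then F (w c) c else 0) ` ?T \<subseteq> {h \<in> GS. cls h = a}"
    proof
      fix h assume "h \<in> (\<lambda>F. \<lambda>c\<in>D. if w c \<le> k then F (w c) c else 0) ` ?T"
      then obtain F where F: "F \<in> ?T" and h: "h = (\<lambda>c\<in>D. if w c \<le> k then F (w c) c else 0)" by auto
      have FV: "F i c \<in> V" if "i \<in> {1..k}" "c \<in> ?Dc i" for i c
        using F that by (auto simp: PiE_def Pi_def)
      have Fs: "sum (F i) (?Dc i) = a i" if "i \<in> {1..k}" for i
        using F that by auto
      have hc: "h c = F i c" if "i \<in> {1..k}" "c \<in> ?Dc i" for i c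
        using that h by auto
      have hPi: "h \<in> D \<rightarrow>\<^sub>E V" unfolding h using FV wpos V0 by auto
      have "(\<Sum>c\<in>D. w c * h c) = (\<Sum>i=1..k. \<Sum>c\<in>?Dc i. w c * h c)"
        using split_by_weight[OF finD wpos, of k "\<lambda>c. w c * h c"] h by auto
      also have "\<dots> = (\<Sum>i=1..k. i * a i)"
      proof (intro sum.cong refl)
        fix i assume i: "i \<in> {1..k}"
        have "(\<Sum>c\<in>?Dc i. w c * h c) = (\<Sum>c\<in>?Dc i. i * F i c)"
          using hc[OF i] by (intro sum.cong) auto
        also have "\<dots> = i * a i" using Fs[OF i] by (simp add: sum_distrib_left[symmetric])
        finally show "(\<Sum>c\<in>?Dc i. w c * h c) = i * a i" .
      qed
      also have "\<dots> = k" by (rule ak)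
      finally have hGS: "h \<in> GS" using hPi by (simp add: GS_def)
      have "cls h = a"
      proof
        fix i
        show "cls h i = a i"
        proof (cases "1 \<le> i \<and> i \<le> k")
          case True
          then have "sum h (?Dc i) = sum (F i) (?Dc i)" using hc[of i] by (intro sum.cong) auto
          then show ?thesis using True Fs[of i] by (simp add: cls_def)
        next
          case False
          then show ?thesis using a0[of i] by (auto simp: cls_def)
        qed
      qed
      then show "h \<in> {h \<in> GS. cls h = a}" using hGS by simp
    qed
  qed
  then have "card {h \<in> GS. cls h = a} = card ?T" by (rule bij_betw_same_card)
  also have "\<dots> = (\<Prod>i=1..k. card {h \<in> ?Dc i \<rightarrow>\<^sub>E V. sum h (?Dc i) = a i})"
    by (simp add: card_PiE)
  finally show ?thesis .
qed

lemma sum_over_GS: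
  "(\<Sum>h\<in>GS. f h) = (\<Sum>a\<in>partitions_mult k. \<Sum>h\<in>{h\<in>GS. cls h = a}. f h)"
  by (rule sum.group[symmetric]) (use finite_GS finite_partitions_mult cls_in in auto)

end

lemma H_poly_count:
  assumes "finite D" "\<forall>c\<in>D. 1 \<le> w c"
  shows "H_poly k (\<lambda>i. card {c\<in>D. w c = i}) = real (card {h \<in> D \<rightarrow>\<^sub>E (UNIV::nat set). (\<Sum>c\<in>D. w c * h c) = k})"
proof -
  let ?G = "GS D w UNIV k"
  have "real (card ?G) = (\<Sum>h\<in>?G. 1)" by simp
  also have "\<dots> = (\<Sum>a\<in>partitions_mult k. \<Sum>h\<in>{h\<in>?G. cls D w k h = a}. 1)"
    by (rule sum_over_GS[OF assms]) simp
  also have "\<dots> = (\<Sum>a\<in>partitions_mult k. real (\<Prod>i=1..k. (card {c\<in>D. w c = i} + a i - 1) choose (a i)))"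
  proof (intro sum.cong refl)
    fix a assume a: "a \<in> partitions_mult k"
    have "(\<Sum>h\<in>{h\<in>?G. cls D w k h = a}. 1::real) = real (card {h\<in>?G. cls D w k h = a})" by simp
    also have "card {h\<in>?G. cls D w k h = a} = (\<Prod>i=1..k. card {h \<in> {c\<in>D. w c = i} \<rightarrow>\<^sub>E (UNIV::nat set). sum h {c\<in>D. w c = i} = a i})"
      by (rule card_fiber[OF assms _ a]) simp
    also have "\<dots> = (\<Prod>i=1..k. (card {c\<in>D. w c = i} + a i - 1) choose (a i))"
      using assms(1) by (intro prod.cong refl card_funs_sum_nat) auto
    finally show "(\<Sum>h\<in>{h\<in>?G. cls D w k h = a}. 1::real) = real (\<Prod>i=1..k. (card {c\<in>D. w c = i} + a i - 1) choose (a i))" .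
  qed
  finally have X: "real (card ?G) = (\<Sum>a\<in>partitions_mult k. real (\<Prod>i=1..k. (card {c\<in>D. w c = i} + a i - 1) choose (a i)))" .
  have eqG: "?G = {h \<in> D \<rightarrow>\<^sub>E (UNIV::nat set). (\<Sum>c\<in>D. w c * h c) = k}" by (simp add: GS_def[OF assms])
  show ?thesis unfolding H_poly_def eqG[symmetric] X by simp
qed

lemma E_poly_count:
  assumes "finite D" "\<forall>c\<in>D. 1 \<le> w c"
  shows "E_poly k (\<lambda>i. card {c\<in>D. w c = i}) =
    (\<Sum>h\<in>{h \<in> D \<rightarrow>\<^sub>E {0::nat,1}. (\<Sum>c\<in>D. w c * h c) = k}. (-1::real) ^ (k - sum h D))"
proof -
  let ?G = "GS D w {0,1} k"
  have "(\<Sum>h\<in>?G. (-1::real) ^ (k - sum h D)) = (\<Sum>a\<in>partitions_mult k. \<Sum>h\<in>{h\<in>?G. cls D w k h = a}. (-1::real) ^ (k - sum h D))"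
    by (rule sum_over_GS[OF assms]) simp
  also have "\<dots> = (\<Sum>a\<in>partitions_mult k. (-1) ^ (k - part_length k a) * real (\<Prod>i=1..k. (card {c\<in>D. w c = i}) choose (a i)))"
  proof (intro sum.cong refl)
    fix a assume a: "a \<in> partitions_mult k"
    have "(\<Sum>h\<in>{h\<in>?G. cls D w k h = a}. (-1::real) ^ (k - sum h D)) = (\<Sum>h\<in>{h\<in>?G. cls D w k h = a}. (-1::real) ^ (k - part_length k a))"
      using sum_GS[OF assms, of "{0,1}"] by (intro sum.cong) auto
    also have "\<dots> = (-1) ^ (k - part_length k a) * real (card {h\<in>?G. cls D w k h = a})" by simp
    also have "card {h\<in>?G. cls D w k h = a} = (\<Prod>i=1..k. card {h \<in> {c\<in>D. w c = i} \<rightarrow>\<^sub>E {0::nat,1}. sum h {c\<in>D. w c = i} = a i})"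
      by (rule card_fiber[OF assms _ a]) simp
    also have "\<dots> = (\<Prod>i=1..k. (card {c\<in>D. w c = i}) choose (a i))"
      using assms(1) by (intro prod.cong refl card_funs_sum_01) auto
    finally show "(\<Sum>h\<in>{h\<in>?G. cls D w k h = a}. (-1::real) ^ (k - sum h D)) = (-1) ^ (k - part_length k a) * real (\<Prod>i=1..k. (card {c\<in>D. w c = i}) choose (a i))" .
  qed
  finally have X: "(\<Sum>h\<in>?G. (-1::real) ^ (k - sum h D)) = (\<Sum>a\<in>partitions_mult k. (-1) ^ (k - part_length k a) * real (\<Prod>i=1..k. (card {c\<in>D. w c = i}) choose (a i)))" .
  have eqG: "?G = {h \<in> D \<rightarrow>\<^sub>E {0::nat,1}. (\<Sum>c\<in>D. w c * h c) = k}" by (simp add: GS_def[OF assms])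
  show ?thesis unfolding E_poly_def eqG[symmetric] X by simp
qed


context
  fixes A :: "nat set" and \<sigma> :: "nat \<Rightarrow> nat"
  assumes finA: "finite A" and perm: "\<sigma> permutes A"
begin

lemma permu: "permutation \<sigma>" using finA perm permutation_permutes by blast

lemma self_orb: "x \<in> orbit \<sigma> x" using permutation_self_in_orbit[OF permu] .

lemma orb_sub: "x \<in> A \<Longrightarrow> orbit \<sigma> x \<subseteq> A" using permutes_orbit_subset[OF perm] .

lemma orb_eq: "y \<in> orbit \<sigma> x \<Longrightarrow> orbit \<sigma> y = orbit \<sigma> x"
  by (rule orbit_cyclic_eq3[OF cyclic_on_orbit'[OF permu]])

lemma orb_step: "orbit \<sigma> (\<sigma> x) = orbit \<sigma> x"
  using orb_eq[OF orbit.base] .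

lemma orb_fin: "finite (orbit \<sigma> x)"
  using finite_orbit[OF self_orb] .

lemma orb_card: "1 \<le> card (orbit \<sigma> x)"
proof -
  have "orbit \<sigma> x \<noteq> {}" using self_orb by auto
  then show ?thesis using orb_fin by (simp add: Suc_le_eq card_gt_0_iff)
qed

lemma Cy_Union: "\<Union>(orbit \<sigma> ` A) = A"
  using orb_sub self_orb by blast

lemma Cy_disj: "\<forall>c\<in>orbit \<sigma> ` A. \<forall>d\<in>orbit \<sigma> ` A. c \<noteq> d \<longrightarrow> c \<inter> d = {}"
proof (intro ballI impI)
  fix c d assume "c \<in> orbit \<sigma> ` A" "d \<in> orbit \<sigma> ` A" "c \<noteq> d"
  then obtain x y where c: "c = orbit \<sigma> x" and d: "d = orbit \<sigma> y" by auto
  have "z \<notin> d" if "z \<in> c" for z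
  proof
    assume "z \<in> d"
    have "orbit \<sigma> z = c" using orb_eq[of z x] c that by simp
    moreover have "orbit \<sigma> z = d" using orb_eq[of z y] d \<open>z \<in> d\<close> by simp
    ultimately show False using \<open>c \<noteq> d\<close> by simp
  qed
  then show "c \<inter> d = {}" by blast
qed

lemma sum_Cy: "sum f A = (\<Sum>c\<in>orbit \<sigma> ` A. sum f c)"
proof -
  have fins: "\<forall>c\<in>orbit \<sigma> ` A. finite c" using orb_fin by blast
  have "sum f (\<Union>(orbit \<sigma> ` A)) = (sum (sum f)) (orbit \<sigma> ` A)"
    using sum.Union_disjoint[OF fins Cy_disj] by simp
  moreover have "sum f (\<Union>(orbit \<sigma> ` A)) = sum f A" by (simp only: Cy_Union)
  ultimately show ?thesis by simp
qed

lemma inv_const: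
  assumes "\<forall>x\<in>A. g (\<sigma> x) = g x" "x \<in> A" "y \<in> orbit \<sigma> x"
  shows "g y = g x"
proof -
  obtain m where y: "y = (\<sigma> ^^ m) x" using assms(3) orbit_altdef_permutation[OF permu] by auto
  have "g ((\<sigma> ^^ m) x) = g x \<and> (\<sigma> ^^ m) x \<in> A" for m
  proof (induction m)
    case (Suc m)
    then show ?case using assms(1) permutes_in_image[OF perm] by auto
  qed (use assms(2) in simp)
  then show ?thesis using y by simp
qed

lemma restrict_permutes:
  assumes "F \<subseteq> A" "\<forall>x\<in>F. \<sigma> x \<in> F"
  shows "perm_restrict \<sigma> F permutes F"
proof (rule bij_imp_permutes)
  have inj: "inj_on (perm_restrict \<sigma> F) F"
  proof (rule inj_onI)
    fix x y assume "x \<in> F" "y \<in> F" "perm_restrict \<sigma> F x = perm_restrict \<sigma> F y"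
    then have "\<sigma> x = \<sigma> y" by (simp add: perm_restrict_def)
    then show "x = y" using permutes_inj[OF perm] by (simp add: inj_eq)
  qed
  have sub: "perm_restrict \<sigma> F ` F \<subseteq> F" using assms by (auto simp: perm_restrict_def)
  have finF: "finite F" using assms(1) finA finite_subset by blast
  have "perm_restrict \<sigma> F ` F = F" using endo_inj_surj[OF finF sub inj] .
  then show "bij_betw (perm_restrict \<sigma> F) F F" using inj by (simp add: bij_betw_def)
  show "\<And>x. x \<notin> F \<Longrightarrow> perm_restrict \<sigma> F x = x" by (simp add: perm_restrict_def)
qed

lemma sign_sigma: "sign \<sigma> = (-1) ^ (\<Sum>c\<in>orbit \<sigma> ` A. card c - 1)"
  using sign_orbits[OF finA perm] .

lemma sign_restrict_union:
  assumes "F = \<Union>(orbit \<sigma> ` A \<inter> P)"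
  shows "sign (perm_restrict \<sigma> F) = (-1) ^ (\<Sum>c\<in>orbit \<sigma> ` A \<inter> P. card c - 1)"
proof -
  have FA: "F \<subseteq> A" using assms Cy_Union by blast
  have clos: "\<forall>x\<in>F. \<sigma> x \<in> F"
  proof
    fix x assume "x \<in> F"
    then obtain y where y: "y \<in> A" "orbit \<sigma> y \<in> P" "x \<in> orbit \<sigma> y" using assms by auto
    have "\<sigma> x \<in> orbit \<sigma> y" using y(3) by (rule orbit.step)
    then show "\<sigma> x \<in> F" using y(1,2) unfolding assms by blast
  qed
  have clos': "\<And>y. y \<in> F \<Longrightarrow> \<sigma> y \<in> F" using clos by blast
  have finF: "finite F" using FA finA finite_subset by blast
  have "sign (perm_restrict \<sigma> F) = (-1) ^ (\<Sum>c\<in>orbit (perm_restrict \<sigma> F) ` F. card c - 1)"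
    using sign_orbits[OF finF restrict_permutes[OF FA clos]] .
  also have "orbit (perm_restrict \<sigma> F) ` F = orbit \<sigma> ` F"
    by (rule image_cong[OF refl], rule orbit_perm_restrict[OF clos'])
  also have "orbit \<sigma> ` F = orbit \<sigma> ` A \<inter> P"
  proof
    show "orbit \<sigma> ` F \<subseteq> orbit \<sigma> ` A \<inter> P"
    proof
      fix c assume "c \<in> orbit \<sigma> ` F"
      then obtain x where x: "x \<in> F" "c = orbit \<sigma> x" by auto
      then obtain y where y: "y \<in> A" "orbit \<sigma> y \<in> P" "x \<in> orbit \<sigma> y" using assms by auto
      then show "c \<in> orbit \<sigma> ` A \<inter> P" using x orb_eq[OF y(3)] by auto
    qed
    show "orbit \<sigma> ` A \<inter> P \<subseteq> orbit \<sigma> ` F"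
    proof
      fix c assume c: "c \<in> orbit \<sigma> ` A \<inter> P"
      then obtain y where y: "y \<in> A" "c = orbit \<sigma> y" by auto
      then have "y \<in> F" using assms c self_orb by blast
      then show "c \<in> orbit \<sigma> ` F" using y by auto
    qed
  qed
  finally show ?thesis .
qed

end


definition Gset :: "nat set \<Rightarrow> nat \<Rightarrow> nat \<Rightarrow> (nat \<Rightarrow> nat \<times> nat) set" where
  "Gset A k l = {g \<in> A \<rightarrow>\<^sub>E (UNIV \<times> {0,1}). (\<Sum>x\<in>A. fst (g x)) = k \<and> (\<Sum>x\<in>A. snd (g x)) = l}"

definition chi :: "nat set \<Rightarrow> (nat \<Rightarrow> nat) \<Rightarrow> (nat \<Rightarrow> nat \<times> nat) \<Rightarrow> int" where
  "chi A \<sigma> g = sign (perm_restrict \<sigma> {x\<in>A. snd (g x) = 0})"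

definition rep :: "nat set \<Rightarrow> nat" where "rep c = (SOME x. x \<in> c)"

context
  fixes A :: "nat set" and \<sigma> :: "nat \<Rightarrow> nat" and k l :: nat
  assumes finA: "finite A" and perm: "\<sigma> permutes A"
begin

abbreviation "Cy \<equiv> orbit \<sigma> ` A"
definition "H1 = {h \<in> Cy \<rightarrow>\<^sub>E (UNIV::nat set). (\<Sum>c\<in>Cy. card c * h c) = k}"
definition "H2 = {h \<in> Cy \<rightarrow>\<^sub>E {0::nat,1}. (\<Sum>c\<in>Cy. card c * h c) = l}"
definition "Inv = {g \<in> Gset A k l. \<forall>x\<in>A. g (\<sigma> x) = g x}"
definition "lift = (\<lambda>(h1::nat set \<Rightarrow> nat, h2::nat set \<Rightarrow> nat). (\<lambda>x\<in>A. (h1 (orbit \<sigma> x), h2 (orbit \<sigma> x))))"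

lemma finCy: "finite Cy" using finA by simp

lemma rep_in: assumes "x \<in> A" shows "rep (orbit \<sigma> x) \<in> orbit \<sigma> x"
  unfolding rep_def using self_orb[OF finA perm] by (rule someI)

lemma rep_orb: assumes "x \<in> A" shows "orbit \<sigma> (rep (orbit \<sigma> x)) = orbit \<sigma> x"
  using orb_eq[OF finA perm rep_in[OF assms]] .

lemma rep_g: assumes "x \<in> A" "\<forall>y\<in>A. g (\<sigma> y) = g y" shows "g (rep (orbit \<sigma> x)) = g x"
  using inv_const[OF finA perm assms(2,1) rep_in[OF assms(1)]] .

lemma sum_lift: "(\<Sum>x\<in>A. f (orbit \<sigma> x)) = (\<Sum>c\<in>Cy. card c * f c)"
proof -
  have "(\<Sum>x\<in>A. f (orbit \<sigma> x)) = (\<Sum>c\<in>Cy. \<Sum>x\<in>c. f (orbit \<sigma> x))"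
    by (rule sum_Cy[OF finA perm])
  also have "\<dots> = (\<Sum>c\<in>Cy. card c * f c)"
  proof (rule sum.cong[OF refl])
    fix c assume "c \<in> Cy"
    then obtain y where y: "y \<in> A" "c = orbit \<sigma> y" by auto
    have "(\<Sum>x\<in>c. f (orbit \<sigma> x)) = (\<Sum>x\<in>c. f c)"
      using orb_eq[OF finA perm] y by (intro sum.cong) auto
    then show "(\<Sum>x\<in>c. f (orbit \<sigma> x)) = card c * f c" by simp
  qed
  finally show ?thesis .
qed

lemma lift_bij: "bij_betw lift (H1 \<times> H2) Inv"
proof (rule bij_betw_byWitness[where f' = "\<lambda>g. (\<lambda>c\<in>Cy. fst (g (rep c)), \<lambda>c\<in>Cy. snd (g (rep c)))"])
  show "\<forall>p\<in>H1 \<times> H2. (\<lambda>g. (\<lambda>c\<in>Cy. fst (g (rep c)), \<lambda>c\<in>Cy. snd (g (rep c)))) (lift p) = p"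
  proof
    fix p assume p: "p \<in> H1 \<times> H2"
    obtain h1 h2 where hp: "p = (h1, h2)" by fastforce
    have e1: "h1 \<in> Cy \<rightarrow>\<^sub>E UNIV" "h2 \<in> Cy \<rightarrow>\<^sub>E {0,1}" using p hp by (auto simp: H1_def H2_def)
    have "(\<lambda>c\<in>Cy. fst (lift p (rep c))) = h1"
    proof
      fix c show "(\<lambda>c\<in>Cy. fst (lift p (rep c))) c = h1 c"
      proof (cases "c \<in> Cy")
        case True
        then obtain y where y: "y \<in> A" "c = orbit \<sigma> y" by auto
        have "rep c \<in> A" using rep_in[OF y(1)] orb_sub[OF finA perm y(1)] y by auto
        then show ?thesis using True y rep_orb[OF y(1)] by (simp add: lift_def hp)
      next
        case False then show ?thesis using e1 by (auto simp: PiE_def extensional_def)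
      qed
    qed
    moreover have "(\<lambda>c\<in>Cy. snd (lift p (rep c))) = h2"
    proof
      fix c show "(\<lambda>c\<in>Cy. snd (lift p (rep c))) c = h2 c"
      proof (cases "c \<in> Cy")
        case True
        then obtain y where y: "y \<in> A" "c = orbit \<sigma> y" by auto
        have "rep c \<in> A" using rep_in[OF y(1)] orb_sub[OF finA perm y(1)] y by auto
        then show ?thesis using True y rep_orb[OF y(1)] by (simp add: lift_def hp)
      next
        case False then show ?thesis using e1 by (auto simp: PiE_def extensional_def)
      qed
    qed
    ultimately show "(\<lambda>g. (\<lambda>c\<in>Cy. fst (g (rep c)), \<lambda>c\<in>Cy. snd (g (rep c)))) (lift p) = p"
      using hp by simp
  qed
  show "\<forall>g\<in>Inv. lift ((\<lambda>g. (\<lambda>c\<in>Cy. fst (g (rep c)), \<lambda>c\<in>Cy. snd (g (rep c)))) g) = g"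
  proof
    fix g assume g: "g \<in> Inv"
    have gi: "\<forall>y\<in>A. g (\<sigma> y) = g y" and gE: "g \<in> A \<rightarrow>\<^sub>E (UNIV \<times> {0,1})"
      using g by (auto simp: Inv_def Gset_def)
    show "lift ((\<lambda>g. (\<lambda>c\<in>Cy. fst (g (rep c)), \<lambda>c\<in>Cy. snd (g (rep c)))) g) = g"
    proof
      fix x show "lift ((\<lambda>g. (\<lambda>c\<in>Cy. fst (g (rep c)), \<lambda>c\<in>Cy. snd (g (rep c)))) g) x = g x"
      proof (cases "x \<in> A")
        case True
        then show ?thesis using rep_g[OF True gi] by (simp add: lift_def)
      next
        case False then show ?thesis using gE by (auto simp: lift_def PiE_def extensional_def)
      qed
    qed
  qed
  show "lift ` (H1 \<times> H2) \<subseteq> Inv"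
  proof
    fix g assume "g \<in> lift ` (H1 \<times> H2)"
    then obtain h1 h2 where h: "h1 \<in> H1" "h2 \<in> H2" and g: "g = lift (h1, h2)" by auto
    have g': "g = (\<lambda>x\<in>A. (h1 (orbit \<sigma> x), h2 (orbit \<sigma> x)))" using g by (simp add: lift_def)
    have h2v: "h2 (orbit \<sigma> x) \<in> {0,1}" if "x \<in> A" for x using h(2) that by (auto simp: H2_def PiE_def Pi_def)
    have "(\<Sum>x\<in>A. fst (g x)) = (\<Sum>x\<in>A. h1 (orbit \<sigma> x))" unfolding g' by (intro sum.cong) auto
    also have "\<dots> = k" using sum_lift[of h1] h(1) by (simp add: H1_def)
    finally have s1: "(\<Sum>x\<in>A. fst (g x)) = k" .
    have "(\<Sum>x\<in>A. snd (g x)) = (\<Sum>x\<in>A. h2 (orbit \<sigma> x))" unfolding g' by (intro sum.cong) auto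
    also have "\<dots> = l" using sum_lift[of h2] h(2) by (simp add: H2_def)
    finally have s2: "(\<Sum>x\<in>A. snd (g x)) = l" .
    have gE: "g \<in> A \<rightarrow>\<^sub>E (UNIV \<times> {0,1})" unfolding g' using h2v by auto
    have gi: "\<forall>x\<in>A. g (\<sigma> x) = g x"
      unfolding g' using orb_step[OF finA perm] permutes_in_image[OF perm] by auto
    show "g \<in> Inv" using s1 s2 gE gi by (simp add: Inv_def Gset_def)
  qed
  show "(\<lambda>g. (\<lambda>c\<in>Cy. fst (g (rep c)), \<lambda>c\<in>Cy. snd (g (rep c)))) ` Inv \<subseteq> H1 \<times> H2"
  proof
    fix p assume "p \<in> (\<lambda>g. (\<lambda>c\<in>Cy. fst (g (rep c)), \<lambda>c\<in>Cy. snd (g (rep c)))) ` Inv"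
    then obtain g where g: "g \<in> Inv" and p: "p = (\<lambda>c\<in>Cy. fst (g (rep c)), \<lambda>c\<in>Cy. snd (g (rep c)))" by auto
    have gi: "\<forall>y\<in>A. g (\<sigma> y) = g y" and gE: "g \<in> A \<rightarrow>\<^sub>E (UNIV \<times> {0,1})"
      and gs: "(\<Sum>x\<in>A. fst (g x)) = k" "(\<Sum>x\<in>A. snd (g x)) = l"
      using g by (auto simp: Inv_def Gset_def)
    have "(\<Sum>c\<in>Cy. card c * (\<lambda>c\<in>Cy. fst (g (rep c))) c) = (\<Sum>x\<in>A. (\<lambda>c\<in>Cy. fst (g (rep c))) (orbit \<sigma> x))"
      by (rule sum_lift[symmetric])
    also have "\<dots> = (\<Sum>x\<in>A. fst (g x))"
      using rep_g[OF _ gi] by (intro sum.cong) auto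
    finally have a1: "(\<lambda>c\<in>Cy. fst (g (rep c))) \<in> H1" using gs by (simp add: H1_def)
    have "(\<Sum>c\<in>Cy. card c * (\<lambda>c\<in>Cy. snd (g (rep c))) c) = (\<Sum>x\<in>A. (\<lambda>c\<in>Cy. snd (g (rep c))) (orbit \<sigma> x))"
      by (rule sum_lift[symmetric])
    also have "\<dots> = (\<Sum>x\<in>A. snd (g x))"
      using rep_g[OF _ gi] by (intro sum.cong) auto
    finally have s2: "(\<Sum>c\<in>Cy. card c * (\<lambda>c\<in>Cy. snd (g (rep c))) c) = l" using gs by simp
    have v2: "snd (g (rep c)) \<in> {0,1}" if cc: "c \<in> Cy" for c
    proof -
      obtain y where y: "y \<in> A" "c = orbit \<sigma> y" using cc by auto
      have "rep c \<in> A" using rep_in[OF y(1)] orb_sub[OF finA perm y(1)] y by auto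
      then show ?thesis using gE by (auto simp: PiE_def Pi_def)
    qed
    have a2: "(\<lambda>c\<in>Cy. snd (g (rep c))) \<in> H2" using s2 v2 by (simp add: H2_def)
    show "p \<in> H1 \<times> H2" using a1 a2 p by simp
  qed
qed


lemma chi_lift:
  assumes "h1 \<in> H1" "h2 \<in> H2"
  shows "chi A \<sigma> (lift (h1, h2)) = (-1) ^ (\<Sum>c\<in>Cy \<inter> {c. h2 c = 0}. card c - 1)"
proof -
  have F: "{x\<in>A. snd (lift (h1, h2) x) = 0} = \<Union>(Cy \<inter> {c. h2 c = 0})"
  proof
    show "{x\<in>A. snd (lift (h1, h2) x) = 0} \<subseteq> \<Union>(Cy \<inter> {c. h2 c = 0})"
    proof
      fix x assume "x \<in> {x\<in>A. snd (lift (h1, h2) x) = 0}"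
      then have x: "x \<in> A" "h2 (orbit \<sigma> x) = 0" by (auto simp: lift_def)
      then show "x \<in> \<Union>(Cy \<inter> {c. h2 c = 0})" using self_orb[OF finA perm, of x] by blast
    qed
    show "\<Union>(Cy \<inter> {c. h2 c = 0}) \<subseteq> {x\<in>A. snd (lift (h1, h2) x) = 0}"
    proof
      fix x assume "x \<in> \<Union>(Cy \<inter> {c. h2 c = 0})"
      then obtain y where y: "y \<in> A" "h2 (orbit \<sigma> y) = 0" "x \<in> orbit \<sigma> y" by auto
      have xA: "x \<in> A" using orb_sub[OF finA perm y(1)] y(3) by auto
      have "orbit \<sigma> x = orbit \<sigma> y" using orb_eq[OF finA perm y(3)] .
      then show "x \<in> {x\<in>A. snd (lift (h1, h2) x) = 0}" using xA y(2) by (simp add: lift_def)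
    qed
  qed
  show ?thesis unfolding chi_def F using sign_restrict_union[OF finA perm refl] .
qed

lemma parity:
  assumes "h2 \<in> H2"
  shows "sign \<sigma> * (-1) ^ (l - sum h2 Cy) = ((-1) ^ (\<Sum>c\<in>Cy \<inter> {c. h2 c = 0}. card c - 1) :: int)"
proof -
  let ?B = "{c. h2 c = 0}"
  define s0 where "s0 = (\<Sum>c\<in>Cy \<inter> ?B. card c - 1)"
  define s1 where "s1 = (\<Sum>c\<in>Cy - ?B. card c - 1)"
  have h2v: "h2 c = 1" if "c \<in> Cy - ?B" for c
    using assms that by (auto simp: H2_def PiE_def Pi_def)
  have ss: "(\<Sum>c\<in>Cy. card c - 1) = s0 + s1"
    unfolding s0_def s1_def by (rule sum.Int_Diff[OF finCy])
  have "l = (\<Sum>c\<in>Cy. card c * h2 c)" using assms by (simp add: H2_def)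
  also have "\<dots> = (\<Sum>c\<in>Cy \<inter> ?B. card c * h2 c) + (\<Sum>c\<in>Cy - ?B. card c * h2 c)"
    by (rule sum.Int_Diff[OF finCy])
  also have "(\<Sum>c\<in>Cy \<inter> ?B. card c * h2 c) = 0" by simp
  also have "(\<Sum>c\<in>Cy - ?B. card c * h2 c) = (\<Sum>c\<in>Cy - ?B. 1 + (card c - 1))"
    using h2v orb_card[OF finA perm] by (intro sum.cong) auto
  also have "\<dots> = card (Cy - ?B) + s1" unfolding s1_def sum.distrib by simp
  finally have lq: "l = card (Cy - ?B) + s1" by simp
  have "sum h2 Cy = sum h2 (Cy \<inter> ?B) + sum h2 (Cy - ?B)" by (rule sum.Int_Diff[OF finCy])
  also have "sum h2 (Cy \<inter> ?B) = 0" by simp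
  also have "sum h2 (Cy - ?B) = (\<Sum>c\<in>Cy - ?B. 1)" using h2v by (intro sum.cong) auto
  finally have sq: "sum h2 Cy = card (Cy - ?B)" by simp
  have "l - sum h2 Cy = s1" using lq sq by simp
  then have "sign \<sigma> * (-1) ^ (l - sum h2 Cy) = (-1) ^ (s0 + s1) * ((-1) ^ s1 :: int)"
    using sign_sigma[OF finA perm] ss by simp
  also have "\<dots> = (-1) ^ s0 * ((-1) ^ s1 * (-1) ^ s1)" by (simp add: power_add)
  also have "(-1) ^ s1 * (-1) ^ s1 = (1::int)" by (simp add: power_add[symmetric] power_mult[symmetric])
  finally show ?thesis unfolding s0_def by simp
qed

lemma per_sigma:
  "real_of_int (sign \<sigma>) * (H_poly k (\<lambda>i. card {c\<in>Cy. card c = i}) * E_poly l (\<lambda>i. card {c\<in>Cy. card c = i}))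
   = (\<Sum>g\<in>Inv. real_of_int (chi A \<sigma> g))"
proof -
  have w1: "\<forall>c\<in>Cy. 1 \<le> card c" using orb_card[OF finA perm] by blast
  let ?psi = "\<lambda>h2. real_of_int ((-1) ^ (\<Sum>c\<in>Cy \<inter> {c. h2 c = 0}. card c - 1))"
  have Hc: "H_poly k (\<lambda>i. card {c\<in>Cy. card c = i}) = real (card H1)"
    using H_poly_count[OF finCy w1, of k] by (simp add: H1_def)
  have Ec: "E_poly l (\<lambda>i. card {c\<in>Cy. card c = i}) = (\<Sum>h\<in>H2. (-1::real) ^ (l - sum h Cy))"
    using E_poly_count[OF finCy w1, of l] by (simp add: H2_def)
  have "(\<Sum>g\<in>Inv. real_of_int (chi A \<sigma> g)) = (\<Sum>p\<in>H1 \<times> H2. real_of_int (chi A \<sigma> (lift p)))"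
    by (rule sum.reindex_bij_betw[OF lift_bij, symmetric])
  also have "\<dots> = (\<Sum>p\<in>H1 \<times> H2. ?psi (snd p))"
    using chi_lift by (intro sum.cong) auto
  also have "\<dots> = (\<Sum>h1\<in>H1. \<Sum>h2\<in>H2. ?psi h2)"
    by (subst sum.cartesian_product) (simp add: case_prod_beta)
  also have "\<dots> = real (card H1) * (\<Sum>h2\<in>H2. ?psi h2)" by simp
  also have "(\<Sum>h2\<in>H2. ?psi h2) = (\<Sum>h2\<in>H2. real_of_int (sign \<sigma>) * (-1::real) ^ (l - sum h2 Cy))"
  proof (rule sum.cong[OF refl])
    fix h2 assume "h2 \<in> H2"
    from parity[OF this] have "real_of_int (sign \<sigma> * (-1) ^ (l - sum h2 Cy)) = ?psi h2" by simp
    then show "?psi h2 = real_of_int (sign \<sigma>) * (-1::real) ^ (l - sum h2 Cy)" by simp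
  qed
  finally show ?thesis unfolding Hc Ec by (simp add: sum_distrib_left mult.assoc mult.left_commute)
qed

end


definition Stab :: "nat set \<Rightarrow> (nat \<Rightarrow> nat \<times> nat) \<Rightarrow> (nat \<Rightarrow> nat) set" where
  "Stab A g = {\<sigma>. \<sigma> permutes A \<and> (\<forall>x\<in>A. g (\<sigma> x) = g x)}"

definition good :: "nat set \<Rightarrow> (nat \<Rightarrow> nat \<times> nat) \<Rightarrow> bool" where
  "good A g \<longleftrightarrow> (\<forall>x\<in>A. \<forall>y\<in>A. g x = g y \<and> snd (g x) = 0 \<longrightarrow> x = y)"

lemma chi_good:
  assumes "finite A" "good A g" "\<sigma> \<in> Stab A g"
  shows "chi A \<sigma> g = 1"
proof -
  have p: "\<sigma> permutes A" and inv: "\<forall>x\<in>A. g (\<sigma> x) = g x" using assms(3) by (auto simp: Stab_def)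
  have "perm_restrict \<sigma> {x\<in>A. snd (g x) = 0} = id"
  proof
    fix z
    show "perm_restrict \<sigma> {x\<in>A. snd (g x) = 0} z = id z"
    proof (cases "z \<in> {x\<in>A. snd (g x) = 0}")
      case True
      then have z: "z \<in> A" "snd (g z) = 0" by auto
      have "\<sigma> z \<in> A" using permutes_in_image[OF p] z by simp
      moreover have "g (\<sigma> z) = g z" using inv z by simp
      ultimately have "\<sigma> z = z" using assms(2) z unfolding good_def by metis
      then show ?thesis using True by (simp add: perm_restrict_def)
    qed (auto simp: perm_restrict_def)
  qed
  then show ?thesis by (simp add: chi_def)
qed

lemma chi_bad:
  assumes finA: "finite A" and x: "x \<in> A" and y: "y \<in> A" and xy: "x \<noteq> y"
    and gxy: "g x = g y" and s0: "snd (g x) = 0"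
  shows "(\<Sum>\<sigma>\<in>Stab A g. chi A \<sigma> g) = 0"
proof -
  let ?F = "{z\<in>A. snd (g z) = 0}"
  let ?t = "transpose x y"
  have xF: "x \<in> ?F" and yF: "y \<in> ?F" using x y gxy s0 by auto
  have bij: "bij_betw (\<lambda>\<sigma>. \<sigma> \<circ> ?t) (Stab A g) (Stab A g)"
  proof (rule bij_betw_byWitness[where f' = "\<lambda>\<sigma>. \<sigma> \<circ> ?t"])
    show "\<forall>\<sigma>\<in>Stab A g. \<sigma> \<circ> ?t \<circ> ?t = \<sigma>" by (simp add: comp_assoc)
    show "\<forall>\<sigma>\<in>Stab A g. \<sigma> \<circ> ?t \<circ> ?t = \<sigma>" by (simp add: comp_assoc)
    have "\<sigma> \<circ> ?t \<in> Stab A g" if "\<sigma> \<in> Stab A g" for \<sigma>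
    proof -
      have p: "\<sigma> permutes A" and inv: "\<forall>z\<in>A. g (\<sigma> z) = g z" using that by (auto simp: Stab_def)
      have "\<sigma> \<circ> ?t permutes A" using permutes_compose[OF permutes_swap_id[OF x y] p] .
      moreover have "g ((\<sigma> \<circ> ?t) z) = g z" if z: "z \<in> A" for z
      proof -
        have tz: "?t z \<in> A" using x y z by (auto simp: transpose_def)
        have "g ((\<sigma> \<circ> ?t) z) = g (?t z)" using inv tz by simp
        also have "\<dots> = g z" using gxy by (auto simp: transpose_def)
        finally show ?thesis .
      qed
      ultimately show ?thesis by (simp add: Stab_def)
    qed
    then show "(\<lambda>\<sigma>. \<sigma> \<circ> ?t) ` Stab A g \<subseteq> Stab A g" "(\<lambda>\<sigma>. \<sigma> \<circ> ?t) ` Stab A g \<subseteq> Stab A g" by auto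
  qed
  have flip: "chi A (\<sigma> \<circ> ?t) g = - chi A \<sigma> g" if "\<sigma> \<in> Stab A g" for \<sigma>
  proof -
    have p: "\<sigma> permutes A" and inv: "\<forall>z\<in>A. g (\<sigma> z) = g z" using that by (auto simp: Stab_def)
    have FA: "?F \<subseteq> A" by auto
    have clos: "\<forall>z\<in>?F. \<sigma> z \<in> ?F" using inv permutes_in_image[OF p] by auto
    have rp: "perm_restrict \<sigma> ?F permutes ?F" using restrict_permutes[OF finA p FA clos] .
    have finF: "finite ?F" using finA by simp
    have eq: "perm_restrict (\<sigma> \<circ> ?t) ?F = perm_restrict \<sigma> ?F \<circ> ?t"
    proof
      fix z
      show "perm_restrict (\<sigma> \<circ> ?t) ?F z = (perm_restrict \<sigma> ?F \<circ> ?t) z"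
      proof (cases "z \<in> ?F")
        case True
        then have "?t z \<in> ?F" using xF yF by (auto simp: transpose_def)
        then show ?thesis using True by (simp add: perm_restrict_def)
      next
        case False
        then have "z \<noteq> x" "z \<noteq> y" using xF yF by auto
        then have "?t z = z" by (simp add: transpose_def)
        then show ?thesis using False by (auto simp: perm_restrict_def)
      qed
    qed
    have "sign (perm_restrict \<sigma> ?F \<circ> ?t) = sign (perm_restrict \<sigma> ?F) * sign ?t"
      by (rule sign_compose[OF permutation_permutes[THEN iffD2] permutation_swap_id]) (use rp finF in blast)
    then show ?thesis unfolding chi_def eq using xy by (simp add: sign_swap_id)
  qed
  have "(\<Sum>\<sigma>\<in>Stab A g. chi A \<sigma> g) = (\<Sum>\<sigma>\<in>Stab A g. chi A (\<sigma> \<circ> ?t) g)"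
    by (rule sum.reindex_bij_betw[OF bij, symmetric])
  also have "\<dots> = - (\<Sum>\<sigma>\<in>Stab A g. chi A \<sigma> g)"
    using flip by (simp add: sum_negf)
  finally show ?thesis by simp
qed


definition Lg :: "nat \<Rightarrow> (nat \<Rightarrow> nat \<times> nat) \<Rightarrow> (nat \<times> nat) list" where
  "Lg n g = map g [1..<Suc n]"
definition lamf :: "nat \<Rightarrow> (nat \<Rightarrow> nat \<times> nat) \<Rightarrow> nat list" where
  "lamf n g = rev (sort (map fst (filter (\<lambda>p. snd p = 1) (Lg n g))))"
definition muf :: "nat \<Rightarrow> (nat \<Rightarrow> nat \<times> nat) \<Rightarrow> nat list" where
  "muf n g = rev (sort (map fst (filter (\<lambda>p. snd p = 0) (Lg n g))))"
definition typf :: "nat \<Rightarrow> (nat \<Rightarrow> nat \<times> nat) \<Rightarrow> nat list \<times> nat list" where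
  "typf n g = (lamf n g, muf n g)"
definition W :: "nat list \<Rightarrow> nat list \<Rightarrow> (nat \<times> nat) list" where
  "W lam mu = map (\<lambda>v. (v, 1)) lam @ map (\<lambda>v. (v, 0)) mu"
definition gt :: "nat \<Rightarrow> nat list \<times> nat list \<Rightarrow> nat \<Rightarrow> nat \<times> nat" where
  "gt n t = (\<lambda>x\<in>{1..n}. W (fst t) (snd t) ! (x - 1))"

lemma Lg_nth: "i < n \<Longrightarrow> Lg n h ! i = h (Suc i)"
  by (simp add: Lg_def del: upt_Suc)

lemma Lg_len: "length (Lg n h) = n"
  by (simp add: Lg_def del: upt_Suc)

lemma sort_mset_eq: "mset xs = mset ys \<Longrightarrow> sort xs = sort (ys :: 'a::linorder list)"
  by (rule properties_for_sort) simp_all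

lemma typ_mset: "mset (Lg n g) = mset (Lg n g') \<Longrightarrow> typf n g = typf n g'"
proof -
  assume m: "mset (Lg n g) = mset (Lg n g')"
  have "sort (map fst (filter P (Lg n g))) = sort (map fst (filter P (Lg n g')))" for P
    by (rule sort_mset_eq) (simp add: m)
  then show ?thesis by (simp add: typf_def lamf_def muf_def)
qed

lemma mset_Lg_comp:
  assumes "\<tau> permutes {1..n}"
  shows "mset (Lg n (g \<circ> \<tau>)) = mset (Lg n g)"
proof -
  have "mset (map \<tau> [1..<Suc n]) = image_mset \<tau> (mset_set {1..<Suc n})" by (simp only: mset_map mset_upt)
  also have "\<dots> = mset_set (\<tau> ` {1..<Suc n})"
    using permutes_inj_on[OF assms] by (intro image_mset_mset_set) (simp add: atLeastLessThanSuc_atLeastAtMost)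
  also have "\<tau> ` {1..<Suc n} = {1..<Suc n}"
    using permutes_image[OF assms] by (simp add: atLeastLessThanSuc_atLeastAtMost)
  finally have "mset (map \<tau> [1..<Suc n]) = mset [1..<Suc n]" by (simp only: mset_upt)
  then have "image_mset g (mset (map \<tau> [1..<Suc n])) = image_mset g (mset [1..<Suc n])" by simp
  then show ?thesis unfolding Lg_def by (simp del: upt_Suc add: multiset.map_comp)
qed

lemma typ_comp: "\<tau> permutes {1..n} \<Longrightarrow> typf n (g \<circ> \<tau>) = typf n g"
  by (rule typ_mset[OF mset_Lg_comp])

lemma mset_filter_split: "mset xs = mset (filter P xs) + mset (filter (\<lambda>x. \<not> P x) xs)"
  by (induction xs) auto

lemma map_fst_filter1: "map (\<lambda>v. (v, c)) (map fst (filter (\<lambda>p. snd p = c) xs)) = filter (\<lambda>p. snd p = c) xs"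
  by (induction xs) auto

lemma mset_Lg_typ:
  assumes "\<forall>x\<in>{1..n}. snd (g x) \<in> {0,1}"
  shows "mset (Lg n g) = image_mset (\<lambda>v. (v, 1)) (mset (lamf n g)) + image_mset (\<lambda>v. (v, 0)) (mset (muf n g))"
proof -
  have s01: "\<forall>p\<in>set (Lg n g). snd p \<in> {0,1}" using assms by (auto simp: Lg_def)
  have f0: "filter (\<lambda>p. \<not> snd p = 1) (Lg n g) = filter (\<lambda>p. snd p = 0) (Lg n g)"
    using s01 by (intro filter_cong) auto
  have "mset (Lg n g) = mset (filter (\<lambda>p. snd p = 1) (Lg n g)) + mset (filter (\<lambda>p. \<not> snd p = 1) (Lg n g))"
    by (rule mset_filter_split)
  also have "filter (\<lambda>p. \<not> snd p = 1) (Lg n g) = filter (\<lambda>p. snd p = 0) (Lg n g)" by (rule f0)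
  also have "mset (filter (\<lambda>p. snd p = 1) (Lg n g)) = image_mset (\<lambda>v. (v, 1)) (mset (lamf n g))"
    unfolding lamf_def using map_fst_filter1[of 1 "Lg n g"] by (metis mset_map mset_rev mset_sort)
  also have "mset (filter (\<lambda>p. snd p = 0) (Lg n g)) = image_mset (\<lambda>v. (v, 0)) (mset (muf n g))"
    unfolding muf_def using map_fst_filter1[of 0 "Lg n g"] by (metis mset_map mset_rev mset_sort)
  finally show ?thesis .
qed

lemma typ_eq_perm:
  assumes "typf n g = typf n g'" "\<forall>x\<in>{1..n}. snd (g x) \<in> {0,1}" "\<forall>x\<in>{1..n}. snd (g' x) \<in> {0,1}"
    and ext: "g \<in> extensional {1..n}" "g' \<in> extensional {1..n}"
  obtains \<tau> where "\<tau> permutes {1..n}" "g' = g \<circ> \<tau>"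
proof -
  have "mset (Lg n g) = mset (Lg n g')"
    using mset_Lg_typ[OF assms(2)] mset_Lg_typ[OF assms(3)] assms(1) by (simp add: typf_def)
  then obtain p where p: "p permutes {..<length (Lg n g)}" "permute_list p (Lg n g) = Lg n g'"
    by (metis mset_eq_permutation)
  have len: "length (Lg n g) = n" by (rule Lg_len)
  have pn: "p permutes {..<n}" using p(1) len by simp
  have gp: "g' (Suc i) = g (Suc (p i))" if "i < n" for i
  proof -
    have "Lg n g' ! i = permute_list p (Lg n g) ! i" using p(2) by simp
    also have "\<dots> = Lg n g ! p i" using permute_list_nth[OF p(1)] that len by simp
    moreover have "p i < n" using permutes_in_image[OF pn] that by simp
    ultimately show ?thesis using that Lg_nth by simp
  qed
  define \<tau> where "\<tau> = (\<lambda>x. if x \<in> {1..n} then Suc (p (x - 1)) else x)"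
  have bij1: "bij_betw (\<lambda>x. x - 1) {1..n} {..<n}"
    by (rule bij_betw_byWitness[where f' = Suc]) auto
  have bij2: "bij_betw Suc {..<n} {1..n}"
    by (rule bij_betw_byWitness[where f' = "\<lambda>x. x - 1"]) auto
  have "bij_betw (Suc \<circ> p \<circ> (\<lambda>x. x - 1)) {1..n} {1..n}"
    using bij_betw_trans[OF bij_betw_trans[OF bij1 permutes_imp_bij[OF pn]] bij2] by (simp add: comp_assoc)
  then have "bij_betw \<tau> {1..n} {1..n}"
    by (rule bij_betw_cong[THEN iffD1, rotated]) (auto simp: \<tau>_def)
  then have tp: "\<tau> permutes {1..n}"
    by (rule bij_imp_permutes) (auto simp: \<tau>_def)
  have "g' = g \<circ> \<tau>"
  proof
    fix x show "g' x = (g \<circ> \<tau>) x"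
    proof (cases "x \<in> {1..n}")
      case True
      then obtain i where i: "x = Suc i" "i < n" by (cases x) auto
      then show ?thesis using gp[OF i(2)] True by (simp add: \<tau>_def)
    next
      case False
      then show ?thesis using ext by (auto simp: \<tau>_def extensional_def)
    qed
  qed
  then show ?thesis using tp that by blast
qed


lemma sum_Lg: "(\<Sum>x\<in>{1..n}. f (h x)) = sum_list (map f (Lg n h))"
proof -
  have st: "set [1..<Suc n] = {1..n}" by (simp only: set_upt atLeastLessThanSuc_atLeastAtMost)
  have "(\<Sum>x\<in>{1..n}. f (h x)) = (\<Sum>x\<in>set [1..<Suc n]. f (h x))" by (simp only: st)
  also have "\<dots> = sum_list (map (\<lambda>x. f (h x)) [1..<Suc n])" by (rule sum_set_upt_conv_sum_list_nat)
  finally show ?thesis by (simp add: Lg_def o_def del: upt_Suc)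
qed

lemma W_len: "length (W lam mu) = length lam + length mu" by (simp add: W_def)

lemma Lg_gt:
  assumes "length lam + length mu = n"
  shows "Lg n (gt n (lam, mu)) = W lam mu"
proof (rule nth_equalityI)
  show "length (Lg n (gt n (lam, mu))) = length (W lam mu)" using assms by (simp add: Lg_len W_len)
  fix i assume "i < length (Lg n (gt n (lam, mu)))"
  then have i: "i < n" by (simp add: Lg_len)
  then show "Lg n (gt n (lam, mu)) ! i = W lam mu ! i" by (simp add: Lg_nth gt_def)
qed

lemma sort_desc: "sorted_wrt (\<ge>) xs \<Longrightarrow> rev (sort xs) = (xs :: nat list)"
proof -
  assume "sorted_wrt (\<ge>) xs"
  then have "sorted (rev xs)" by (simp add: sorted_wrt_rev)
  then have "sort xs = rev xs" by (intro properties_for_sort) simp_all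
  then show ?thesis by simp
qed

lemma filter_W1: "filter (\<lambda>p. snd p = 1) (W lam mu) = map (\<lambda>v. (v, 1)) lam"
  by (simp add: W_def filter_map o_def)

lemma filter_W0: "filter (\<lambda>p. snd p = 0) (W lam mu) = map (\<lambda>v. (v, 0)) mu"
  by (simp add: W_def filter_map o_def)

lemma typf_gt:
  assumes "sorted_wrt (\<ge>) lam" "sorted_wrt (\<ge>) mu" "length lam + length mu = n"
  shows "typf n (gt n (lam, mu)) = (lam, mu)"
proof -
  have "lamf n (gt n (lam, mu)) = lam"
    unfolding lamf_def Lg_gt[OF assms(3)] filter_W1 by (simp add: o_def sort_desc[OF assms(1)])
  moreover have "muf n (gt n (lam, mu)) = mu"
    unfolding muf_def Lg_gt[OF assms(3)] filter_W0 by (simp add: o_def sort_desc[OF assms(2)])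
  ultimately show ?thesis by (simp add: typf_def)
qed

lemma gt_Gset:
  assumes "length lam = l" "length mu = n - l" "l \<le> n" "sum_list lam + sum_list mu = k"
  shows "gt n (lam, mu) \<in> Gset {1..n} k l"
proof -
  have len: "length lam + length mu = n" using assms by simp
  have v: "gt n (lam, mu) x \<in> UNIV \<times> {0,1}" if "x \<in> {1..n}" for x
  proof -
    have "x - 1 < n" using that by auto
    then have "x - 1 < length (W lam mu)" using len by (simp add: W_len)
    then have "W lam mu ! (x - 1) \<in> set (W lam mu)" by simp
    moreover have "\<forall>p\<in>set (W lam mu). snd p \<in> {0,1}" by (auto simp: W_def)
    ultimately have "snd (W lam mu ! (x - 1)) \<in> {0,1}" by blast
    then show ?thesis using that by (auto simp: gt_def mem_Times_iff)
  qed
  have "(\<Sum>x\<in>{1..n}. fst (gt n (lam, mu) x)) = sum_list (map fst (W lam mu))"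
    using sum_Lg[of fst] Lg_gt[OF len] by simp
  also have "\<dots> = k" using assms(4) by (simp add: W_def o_def)
  finally have s1: "(\<Sum>x\<in>{1..n}. fst (gt n (lam, mu) x)) = k" .
  have "(\<Sum>x\<in>{1..n}. snd (gt n (lam, mu) x)) = sum_list (map snd (W lam mu))"
    using sum_Lg[of snd] Lg_gt[OF len] by simp
  also have "\<dots> = l" using assms(1) by (simp add: W_def o_def sum_list_triv)
  finally have s2: "(\<Sum>x\<in>{1..n}. snd (gt n (lam, mu) x)) = l" .
  have e: "gt n (lam, mu) \<in> {1..n} \<rightarrow>\<^sub>E (UNIV \<times> {0,1})" using v by (auto simp: gt_def)
  show ?thesis using e s1 s2 by (simp add: Gset_def)
qed

lemma sum_list_sort: "sum_list (sort (xs :: nat list)) = sum_list xs"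
  by (metis mset_sort sum_mset_sum_list)

lemma sum_list_snd01: "\<forall>p\<in>set xs. snd p \<in> {0::nat,1} \<Longrightarrow> sum_list (map snd xs) = length (filter (\<lambda>p. snd p = 1) xs)"
  by (induction xs) auto

lemma sum_list_fst_split: "\<forall>p\<in>set (xs :: (nat \<times> nat) list). snd p \<in> {0::nat,1} \<Longrightarrow>
  sum_list (map fst xs) = sum_list (map fst (filter (\<lambda>p. snd p = 1) xs)) + sum_list (map fst (filter (\<lambda>p. snd p = 0) xs))"
proof (induction xs)
  case (Cons p xs)
  then show ?case by (cases "snd p = 1") auto
qed simp

lemma length_split01: "\<forall>p\<in>set xs. snd p \<in> {0::nat,1} \<Longrightarrow>
  length (filter (\<lambda>p. snd p = 1) xs) + length (filter (\<lambda>p. snd p = 0) xs) = length xs"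
  by (induction xs) auto

lemma Gset_typf:
  assumes "g \<in> Gset {1..n} k l"
  shows "length (lamf n g) = l \<and> length (muf n g) = n - l \<and> sorted_wrt (\<ge>) (lamf n g) \<and> sorted_wrt (\<ge>) (muf n g)
    \<and> sum_list (lamf n g) + sum_list (muf n g) = k \<and> l \<le> n"
proof -
  have gE: "g \<in> {1..n} \<rightarrow>\<^sub>E (UNIV \<times> {0,1})" and s1: "(\<Sum>x\<in>{1..n}. fst (g x)) = k"
    and s2: "(\<Sum>x\<in>{1..n}. snd (g x)) = l" using assms by (auto simp: Gset_def)
  have s01: "\<forall>p\<in>set (Lg n g). snd p \<in> {0,1}" using gE by (auto simp: Lg_def PiE_def Pi_def)
  have l1: "length (lamf n g) = l"
    using s2 sum_Lg[of snd g n] sum_list_snd01[OF s01] by (simp add: lamf_def)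
  have l2: "length (lamf n g) + length (muf n g) = n"
    using length_split01[OF s01] by (simp add: lamf_def muf_def Lg_len)
  have sw: "sorted_wrt (\<ge>) (rev (sort xs))" for xs :: "nat list"
    by (simp add: sorted_wrt_rev)
  have sm: "sum_list (lamf n g) + sum_list (muf n g) = k"
    using s1 sum_Lg[of fst g n] sum_list_fst_split[OF s01] by (simp add: lamf_def muf_def sum_list_rev sum_list_sort)
  show ?thesis using l1 l2 sm sw by (auto simp: lamf_def muf_def)
qed

lemma good_gt:
  assumes "length lam + length mu = n"
  shows "good {1..n} (gt n (lam, mu)) \<longleftrightarrow> distinct mu"
proof -
  let ?m = "length lam"
  have gx: "gt n (lam, mu) x = (if x - 1 < ?m then (lam ! (x - 1), 1) else (mu ! (x - 1 - ?m), 0))"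
    if "x \<in> {1..n}" for x
    using that assms by (auto simp: gt_def W_def nth_append)
  show ?thesis
  proof
    assume g: "good {1..n} (gt n (lam, mu))"
    show "distinct mu"
    proof (rule distinct_conv_nth[THEN iffD2], intro allI impI)
      fix i j assume ij: "i < length mu" "j < length mu" "i \<noteq> j"
      show "mu ! i \<noteq> mu ! j"
      proof
        assume e: "mu ! i = mu ! j"
        let ?x = "i + ?m + 1" and ?y = "j + ?m + 1"
        have xy: "?x \<in> {1..n}" "?y \<in> {1..n}" using ij assms by auto
        have "gt n (lam, mu) ?x = gt n (lam, mu) ?y" "snd (gt n (lam, mu) ?x) = 0"
          using gx[OF xy(1)] gx[OF xy(2)] e by auto
        then have "?x = ?y" using g xy unfolding good_def by blast
        then show False using ij by simp
      qed
    qed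
  next
    assume d: "distinct mu"
    show "good {1..n} (gt n (lam, mu))" unfolding good_def
    proof (intro ballI impI)
      fix x y assume xy: "x \<in> {1..n}" "y \<in> {1..n}" and e: "gt n (lam, mu) x = gt n (lam, mu) y \<and> snd (gt n (lam, mu) x) = 0"
      have nx: "\<not> x - 1 < ?m" using e gx[OF xy(1)] by (auto split: if_splits)
      have ny: "\<not> y - 1 < ?m" using e gx[OF xy(1)] gx[OF xy(2)] by (auto split: if_splits)
      have "mu ! (x - 1 - ?m) = mu ! (y - 1 - ?m)" using e gx[OF xy(1)] gx[OF xy(2)] nx ny by simp
      moreover have "x - 1 - ?m < length mu" "y - 1 - ?m < length mu" using xy assms nx ny by auto
      ultimately have "x - 1 - ?m = y - 1 - ?m" using d by (simp add: nth_eq_iff_index_eq)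
      then show "x = y" using nx ny xy by auto
    qed
  qed
qed

lemma strict_iff:
  assumes "sorted_wrt (\<ge>) (mu :: nat list)"
  shows "sorted_wrt (>) mu \<longleftrightarrow> distinct mu"
proof -
  have "sorted_wrt (>) mu \<longleftrightarrow> sorted_wrt (<) (rev mu)" by (simp add: sorted_wrt_rev)
  also have "\<dots> \<longleftrightarrow> sorted (rev mu) \<and> distinct (rev mu)" by (rule strict_sorted_iff)
  also have "\<dots> \<longleftrightarrow> distinct mu" using assms by (simp add: sorted_wrt_rev)
  finally show ?thesis .
qed


lemma good_comp:
  assumes "\<tau> permutes A"
  shows "good A (g \<circ> \<tau>) \<longleftrightarrow> good A g"
proof
  assume g: "good A (g \<circ> \<tau>)"
  show "good A g" unfolding good_def
  proof (intro ballI impI)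
    fix x y assume xy: "x \<in> A" "y \<in> A" "g x = g y \<and> snd (g x) = 0"
    have ix: "inv \<tau> x \<in> A" "inv \<tau> y \<in> A" using xy permutes_in_image[OF permutes_inv[OF assms]] by auto
    have e: "\<tau> (inv \<tau> x) = x" "\<tau> (inv \<tau> y) = y" using permutes_inverses(1)[OF assms] by auto
    have "inv \<tau> x = inv \<tau> y" using g ix xy e unfolding good_def by (metis comp_apply)
    then show "x = y" using e by metis
  qed
next
  assume g: "good A g"
  show "good A (g \<circ> \<tau>)" unfolding good_def
  proof (intro ballI impI)
    fix x y assume xy: "x \<in> A" "y \<in> A" "(g \<circ> \<tau>) x = (g \<circ> \<tau>) y \<and> snd ((g \<circ> \<tau>) x) = 0"
    have "\<tau> x \<in> A" "\<tau> y \<in> A" using xy permutes_in_image[OF assms] by auto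
    moreover have "g (\<tau> x) = g (\<tau> y) \<and> snd (g (\<tau> x)) = 0" using xy(3) unfolding comp_apply .
    ultimately have "\<tau> x = \<tau> y" using g unfolding good_def by blast
    then show "x = y" using permutes_inj[OF assms] by (simp add: inj_eq)
  qed
qed

lemma Gset_comp:
  assumes "\<tau> permutes A" "g \<in> Gset A k l"
  shows "g \<circ> \<tau> \<in> Gset A k l"
proof -
  have gE: "g \<in> A \<rightarrow>\<^sub>E (UNIV \<times> {0,1})" and s: "(\<Sum>x\<in>A. fst (g x)) = k" "(\<Sum>x\<in>A. snd (g x)) = l"
    using assms(2) by (auto simp: Gset_def)
  have "g \<circ> \<tau> \<in> A \<rightarrow>\<^sub>E (UNIV \<times> {0,1})"
  proof
    fix x assume "x \<in> A" then have "\<tau> x \<in> A" using permutes_in_image[OF assms(1)] by simp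
    then show "(g \<circ> \<tau>) x \<in> UNIV \<times> {0,1}" using gE by auto
  next
    fix x assume "x \<notin> A" then have "\<tau> x = x" using permutes_not_in[OF assms(1)] by simp
    then show "(g \<circ> \<tau>) x = undefined" using gE \<open>x \<notin> A\<close> by (auto simp: PiE_def extensional_def)
  qed
  moreover have "(\<Sum>x\<in>A. fst ((g \<circ> \<tau>) x)) = k"
    using sum.permute[OF assms(1), of "\<lambda>x. fst (g x)"] s(1) by (simp add: o_def)
  moreover have "(\<Sum>x\<in>A. snd ((g \<circ> \<tau>) x)) = l"
    using sum.permute[OF assms(1), of "\<lambda>x. snd (g x)"] s(2) by (simp add: o_def)
  ultimately show ?thesis by (simp add: Gset_def)
qed

lemma finite_Gset: assumes "finite A" shows "finite (Gset A k l)"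
proof -
  have "Gset A k l \<subseteq> A \<rightarrow>\<^sub>E ({0..k} \<times> {0,1})"
  proof
    fix g assume g: "g \<in> Gset A k l"
    have gE: "g \<in> A \<rightarrow>\<^sub>E (UNIV \<times> {0,1})" and s: "(\<Sum>x\<in>A. fst (g x)) = k"
      using g by (auto simp: Gset_def)
    have "fst (g x) \<le> k" if "x \<in> A" for x
    proof -
      have "fst (g x) \<le> (\<Sum>x\<in>A. fst (g x))" using assms that by (intro member_le_sum) auto
      then show ?thesis using s by simp
    qed
    then show "g \<in> A \<rightarrow>\<^sub>E ({0..k} \<times> {0,1})" using gE by (auto simp: PiE_def Pi_def mem_Times_iff)
  qed
  moreover have "finite (A \<rightarrow>\<^sub>E ({0..k} \<times> {0::nat,1}))" using assms by (intro finite_PiE) auto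
  ultimately show ?thesis using finite_subset by blast
qed

lemma card_fib_stab:
  assumes p0: "\<tau>0 permutes A" and g: "g = G0 \<circ> \<tau>0"
  shows "card {\<tau>. \<tau> permutes A \<and> G0 \<circ> \<tau> = g} = card (Stab A g)"
proof -
  have "bij_betw (\<lambda>\<sigma>. \<tau>0 \<circ> \<sigma>) (Stab A g) {\<tau>. \<tau> permutes A \<and> G0 \<circ> \<tau> = g}"
  proof (rule bij_betw_byWitness[where f' = "\<lambda>\<tau>. inv \<tau>0 \<circ> \<tau>"])
    show "\<forall>\<sigma>\<in>Stab A g. inv \<tau>0 \<circ> (\<tau>0 \<circ> \<sigma>) = \<sigma>"
      using permutes_inv_o(2)[OF p0] by (simp add: comp_assoc[symmetric])
    show "\<forall>\<tau>\<in>{\<tau>. \<tau> permutes A \<and> G0 \<circ> \<tau> = g}. \<tau>0 \<circ> (inv \<tau>0 \<circ> \<tau>) = \<tau>"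
      using permutes_inv_o(1)[OF p0] by (simp add: comp_assoc[symmetric])
    show "(\<lambda>\<sigma>. \<tau>0 \<circ> \<sigma>) ` Stab A g \<subseteq> {\<tau>. \<tau> permutes A \<and> G0 \<circ> \<tau> = g}"
    proof
      fix \<tau> assume "\<tau> \<in> (\<lambda>\<sigma>. \<tau>0 \<circ> \<sigma>) ` Stab A g"
      then obtain \<sigma> where s: "\<sigma> \<in> Stab A g" and t: "\<tau> = \<tau>0 \<circ> \<sigma>" by auto
      have ps: "\<sigma> permutes A" and inv: "\<forall>x\<in>A. g (\<sigma> x) = g x" using s by (auto simp: Stab_def)
      have "g \<circ> \<sigma> = g"
      proof
        fix x show "(g \<circ> \<sigma>) x = g x"
          using inv permutes_not_in[OF ps, of x] by (cases "x \<in> A") auto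
      qed
      then have "G0 \<circ> \<tau> = g" using g t by (simp add: comp_assoc)
      moreover have "\<tau> permutes A" using t permutes_compose[OF ps p0] by simp
      ultimately show "\<tau> \<in> {\<tau>. \<tau> permutes A \<and> G0 \<circ> \<tau> = g}" by simp
    qed
    show "(\<lambda>\<tau>. inv \<tau>0 \<circ> \<tau>) ` {\<tau>. \<tau> permutes A \<and> G0 \<circ> \<tau> = g} \<subseteq> Stab A g"
    proof
      fix \<sigma> assume "\<sigma> \<in> (\<lambda>\<tau>. inv \<tau>0 \<circ> \<tau>) ` {\<tau>. \<tau> permutes A \<and> G0 \<circ> \<tau> = g}"
      then obtain \<tau> where t: "\<tau> permutes A" "G0 \<circ> \<tau> = g" and s: "\<sigma> = inv \<tau>0 \<circ> \<tau>" by auto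
      have ps: "\<sigma> permutes A" using s permutes_compose[OF t(1) permutes_inv[OF p0]] by simp
      have "g \<circ> \<sigma> = G0 \<circ> (\<tau>0 \<circ> inv \<tau>0) \<circ> \<tau>" using g s by (simp add: comp_assoc)
      also have "\<dots> = g" using permutes_inv_o(1)[OF p0] t(2) by simp
      finally have "\<forall>x\<in>A. g (\<sigma> x) = g x" by (metis comp_apply)
      then show "\<sigma> \<in> Stab A g" using ps by (simp add: Stab_def)
    qed
  qed
  then show ?thesis by (simp add: bij_betw_same_card)
qed


lemma Gset_ext: "g \<in> Gset A k l \<Longrightarrow> g \<in> extensional A"
  by (auto simp: Gset_def PiE_def)

lemma Gset_snd: "g \<in> Gset A k l \<Longrightarrow> \<forall>x\<in>A. snd (g x) \<in> {0,1}"
  by (auto simp: Gset_def PiE_def Pi_def mem_Times_iff)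

lemma fiber_sum:
  assumes t: "t = (lam, mu)" "sorted_wrt (\<ge>) lam" "sorted_wrt (\<ge>) mu" "length lam = l"
    "length mu = n - l" "l \<le> n" "sum_list lam + sum_list mu = k"
  shows "(\<Sum>g\<in>{g \<in> Gset {1..n} k l. typf n g = t}. card (Stab {1..n} g)) = fact n"
    and "\<forall>g\<in>{g \<in> Gset {1..n} k l. typf n g = t}. good {1..n} g = good {1..n} (gt n t)"
proof -
  let ?A = "{1..n::nat}"
  let ?S = "{\<tau>. \<tau> permutes ?A}"
  let ?G0 = "gt n t"
  have len: "length lam + length mu = n" using t by simp
  have G0in: "?G0 \<in> Gset ?A k l" using gt_Gset[OF t(4,5,6,7)] t(1) by simp
  have G0t: "typf n ?G0 = t" using typf_gt[OF t(2,3) len] t(1) by simp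
  have fib: "{g \<in> Gset ?A k l. typf n g = t} = (\<lambda>\<tau>. ?G0 \<circ> \<tau>) ` ?S"
  proof
    show "{g \<in> Gset ?A k l. typf n g = t} \<subseteq> (\<lambda>\<tau>. ?G0 \<circ> \<tau>) ` ?S"
    proof
      fix g assume g: "g \<in> {g \<in> Gset ?A k l. typf n g = t}"
      then have "typf n ?G0 = typf n g" using G0t by simp
      moreover have "\<forall>x\<in>?A. snd (g x) \<in> {0,1}" "g \<in> extensional ?A"
        using Gset_snd[of g] Gset_ext[of g] g by auto
      ultimately obtain \<tau> where "\<tau> permutes ?A" "g = ?G0 \<circ> \<tau>"
        using typ_eq_perm[of n ?G0 g] Gset_snd[OF G0in] Gset_ext[OF G0in] by metis
      then show "g \<in> (\<lambda>\<tau>. ?G0 \<circ> \<tau>) ` ?S" by auto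
    qed
    show "(\<lambda>\<tau>. ?G0 \<circ> \<tau>) ` ?S \<subseteq> {g \<in> Gset ?A k l. typf n g = t}"
      using Gset_comp[OF _ G0in] typ_comp G0t by auto
  qed
  have "fact n = card ?S" using card_permutations[of ?A n] by simp
  also have "\<dots> = (\<Sum>\<tau>\<in>?S. 1)" by simp
  also have "\<dots> = (\<Sum>g\<in>(\<lambda>\<tau>. ?G0 \<circ> \<tau>) ` ?S. \<Sum>\<tau>\<in>{\<tau>\<in>?S. ?G0 \<circ> \<tau> = g}. 1)"
    by (rule sum.image_gen) (simp add: finite_permutations)
  also have "\<dots> = (\<Sum>g\<in>(\<lambda>\<tau>. ?G0 \<circ> \<tau>) ` ?S. card (Stab ?A g))"
  proof (rule sum.cong[OF refl])
    fix g assume "g \<in> (\<lambda>\<tau>. ?G0 \<circ> \<tau>) ` ?S"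
    then obtain \<tau>0 where p0: "\<tau>0 permutes ?A" and g: "g = ?G0 \<circ> \<tau>0" by auto
    have "(\<Sum>\<tau>\<in>{\<tau>\<in>?S. ?G0 \<circ> \<tau> = g}. 1) = card {\<tau>. \<tau> permutes ?A \<and> ?G0 \<circ> \<tau> = g}" by simp
    also have "\<dots> = card (Stab ?A g)" by (rule card_fib_stab[OF p0 g])
    finally show "(\<Sum>\<tau>\<in>{\<tau>\<in>?S. ?G0 \<circ> \<tau> = g}. 1) = card (Stab ?A g)" .
  qed
  finally show "(\<Sum>g\<in>{g \<in> Gset ?A k l. typf n g = t}. card (Stab ?A g)) = fact n"
    using fib by simp
  show "\<forall>g\<in>{g \<in> Gset ?A k l. typf n g = t}. good ?A g = good ?A ?G0"
    using fib good_comp by auto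
qed

lemma cyc_count_eq:
  assumes "\<sigma> permutes {1..n}"
  shows "cyc_count n \<sigma> = (\<lambda>i. card {c \<in> orbit \<sigma> ` {1..n}. card c = i})"
proof -
  have p: "permutation \<sigma>" using assms permutation_permutes by blast
  show ?thesis unfolding cyc_count_def using perm_orbit_eq_orbit[OF p]
    by (intro ext arg_cong[where f = card]) auto
qed

lemma main_count:
  assumes "l \<le> n"
  shows "(\<Sum>\<sigma>\<in>{\<sigma>. \<sigma> permutes {1..n}}. real_of_int (sign \<sigma>) *
            (H_poly k (cyc_count n \<sigma>) * E_poly l (cyc_count n \<sigma>)))
       = fact n * real (card {(lam, mu). length lam = l \<and> sorted_wrt (\<ge>) lam \<and>
                 length mu = n - l \<and> sorted_wrt (>) mu \<and> sum_list lam + sum_list mu = k})"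
proof -
  let ?A = "{1..n::nat}"
  let ?S = "{\<sigma>. \<sigma> permutes ?A}"
  let ?G = "Gset ?A k l"
  let ?T = "{(lam, mu). length lam = l \<and> sorted_wrt (\<ge>) lam \<and>
                 length mu = n - l \<and> sorted_wrt (>) mu \<and> sum_list lam + sum_list (mu::nat list) = k}"
  have finG: "finite ?G" by (rule finite_Gset) simp
  have finS: "finite ?S" by (simp add: finite_permutations)
  have "(\<Sum>\<sigma>\<in>?S. real_of_int (sign \<sigma>) * (H_poly k (cyc_count n \<sigma>) * E_poly l (cyc_count n \<sigma>)))
      = (\<Sum>\<sigma>\<in>?S. \<Sum>g\<in>{g\<in>?G. \<forall>x\<in>?A. g (\<sigma> x) = g x}. real_of_int (chi ?A \<sigma> g))"
  proof (rule sum.cong[OF refl])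
    fix \<sigma> assume "\<sigma> \<in> ?S"
    then have p: "\<sigma> permutes ?A" by simp
    show "real_of_int (sign \<sigma>) * (H_poly k (cyc_count n \<sigma>) * E_poly l (cyc_count n \<sigma>))
        = (\<Sum>g\<in>{g\<in>?G. \<forall>x\<in>?A. g (\<sigma> x) = g x}. real_of_int (chi ?A \<sigma> g))"
      using per_sigma[OF _ p, of k l] cyc_count_eq[OF p] Inv_def[OF _ p, of k l] by simp
  qed
  also have "\<dots> = (\<Sum>g\<in>?G. \<Sum>\<sigma>\<in>{\<sigma>\<in>?S. \<forall>x\<in>?A. g (\<sigma> x) = g x}. real_of_int (chi ?A \<sigma> g))"
    by (rule sum.swap_restrict[OF finS finG])
  also have "\<dots> = (\<Sum>g\<in>?G. if good ?A g then real (card (Stab ?A g)) else 0)"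
  proof (rule sum.cong[OF refl])
    fix g assume g: "g \<in> ?G"
    have st: "{\<sigma>\<in>?S. \<forall>x\<in>?A. g (\<sigma> x) = g x} = Stab ?A g" by (auto simp: Stab_def)
    show "(\<Sum>\<sigma>\<in>{\<sigma>\<in>?S. \<forall>x\<in>?A. g (\<sigma> x) = g x}. real_of_int (chi ?A \<sigma> g))
        = (if good ?A g then real (card (Stab ?A g)) else 0)"
    proof (cases "good ?A g")
      case True
      then have "(\<Sum>\<sigma>\<in>Stab ?A g. real_of_int (chi ?A \<sigma> g)) = (\<Sum>\<sigma>\<in>Stab ?A g. 1)"
        using chi_good[of ?A g] by (intro sum.cong) auto
      then show ?thesis using True st by simp
    next
      case False
      then obtain x y where xy: "x \<in> ?A" "y \<in> ?A" "g x = g y" "snd (g x) = 0" "x \<noteq> y"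
        unfolding good_def by blast
      have "(\<Sum>\<sigma>\<in>Stab ?A g. chi ?A \<sigma> g) = 0" by (rule chi_bad[OF _ xy(1,2,5,3,4)]) simp
      then have "(\<Sum>\<sigma>\<in>Stab ?A g. real_of_int (chi ?A \<sigma> g)) = 0"
        by (metis of_int_0 of_int_sum)
      then show ?thesis using False st by simp
    qed
  qed
  also have "\<dots> = (\<Sum>t\<in>typf n ` ?G. \<Sum>g\<in>{g\<in>?G. typf n g = t}. if good ?A g then real (card (Stab ?A g)) else 0)"
    by (rule sum.image_gen[OF finG])
  also have "\<dots> = (\<Sum>t\<in>typf n ` ?G. if good ?A (gt n t) then fact n else 0)"
  proof (rule sum.cong[OF refl])
    fix t assume "t \<in> typf n ` ?G"
    then obtain g0 where g0: "g0 \<in> ?G" "t = typf n g0" by auto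
    obtain lam mu where t: "t = (lam, mu)" by fastforce
    have props: "length lam = l" "length mu = n - l" "sorted_wrt (\<ge>) lam" "sorted_wrt (\<ge>) mu"
      "sum_list lam + sum_list mu = k" "l \<le> n"
      using Gset_typf[OF g0(1)] g0(2) t by (auto simp: typf_def)
    note fs = fiber_sum[OF t props(3,4,1,2,6,5)]
    have "(\<Sum>g\<in>{g\<in>?G. typf n g = t}. if good ?A g then real (card (Stab ?A g)) else 0)
        = (\<Sum>g\<in>{g\<in>?G. typf n g = t}. if good ?A (gt n t) then real (card (Stab ?A g)) else 0)"
      using fs(2) by (intro sum.cong) auto
    also have "\<dots> = (if good ?A (gt n t) then real (\<Sum>g\<in>{g\<in>?G. typf n g = t}. card (Stab ?A g)) else 0)"
      by simp
    also have "\<dots> = (if good ?A (gt n t) then fact n else 0)" using fs(1) by simp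
    finally show "(\<Sum>g\<in>{g\<in>?G. typf n g = t}. if good ?A g then real (card (Stab ?A g)) else 0)
        = (if good ?A (gt n t) then fact n else 0)" .
  qed
  also have "\<dots> = fact n * real (card {t\<in>typf n ` ?G. good ?A (gt n t)})"
    using finG by (simp add: sum.If_cases Int_def)
  also have "{t\<in>typf n ` ?G. good ?A (gt n t)} = ?T"
  proof
    show "{t\<in>typf n ` ?G. good ?A (gt n t)} \<subseteq> ?T"
    proof
      fix t assume "t \<in> {t\<in>typf n ` ?G. good ?A (gt n t)}"
      then obtain g0 where g0: "g0 \<in> ?G" "t = typf n g0" and gd: "good ?A (gt n t)" by auto
      obtain lam mu where t: "t = (lam, mu)" by fastforce
      have props: "length lam = l" "length mu = n - l" "sorted_wrt (\<ge>) lam" "sorted_wrt (\<ge>) mu"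
        "sum_list lam + sum_list mu = k" "l \<le> n"
        using Gset_typf[OF g0(1)] g0(2) t by (auto simp: typf_def)
      have "distinct mu" using good_gt[of lam mu n] gd t props by simp
      then have "sorted_wrt (>) mu" using strict_iff[OF props(4)] by simp
      then show "t \<in> ?T" using props t by simp
    qed
    show "?T \<subseteq> {t\<in>typf n ` ?G. good ?A (gt n t)}"
    proof
      fix t assume "t \<in> ?T"
      then obtain lam mu where t: "t = (lam, mu)" and props: "length lam = l" "sorted_wrt (\<ge>) lam"
        "length mu = n - l" "sorted_wrt (>) mu" "sum_list lam + sum_list mu = k" by auto
      have m: "sorted_wrt (\<ge>) mu" by (rule sorted_wrt_mono_rel[OF _ props(4)]) simp
      have d: "distinct mu" using strict_iff[OF m] props(4) by simp
      have len: "length lam + length mu = n" using props assms by simp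
      have gin: "gt n t \<in> ?G" using gt_Gset[OF props(1,3) assms props(5)] t by simp
      have "typf n (gt n t) = t" using typf_gt[OF props(2) m len] t by simp
      then have "t \<in> typf n ` ?G" using gin by (metis image_eqI)
      moreover have "good ?A (gt n t)" using good_gt[OF len] d t by simp
      ultimately show "t \<in> {t\<in>typf n ` ?G. good ?A (gt n t)}" by simp
    qed
  qed
  finally show ?thesis .
qed



theorem proposition3p8:
  fixes a b j n :: nat
  assumes "j \<le> b" and "b + 1 \<le> n"
  shows "signed_moment (\<lambda>X. H_poly (a + 1 + j) X * E_poly (b - j) X) n =
    real (card {(lam, mu). length lam = b - j \<and> sorted_wrt (\<ge>) lam \<and>
                 length mu = n - b + j \<and> sorted_wrt (>) mu \<and>
                 sum_list lam + sum_list mu = a + 1 + j})"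
proof -
  have l: "b - j \<le> n" using assms by simp
  have eq: "n - b + j = n - (b - j)" using assms by simp
  have m: "(\<Sum>\<sigma>\<in>{\<sigma>. \<sigma> permutes {1..n}}. real_of_int (sign \<sigma>) *
            (H_poly (a + 1 + j) (cyc_count n \<sigma>) * E_poly (b - j) (cyc_count n \<sigma>)))
       = fact n * real (card {(lam, mu). length lam = b - j \<and> sorted_wrt (\<ge>) lam \<and>
                 length mu = n - (b - j) \<and> sorted_wrt (>) mu \<and> sum_list lam + sum_list mu = a + 1 + j})"
    by (rule main_count[OF l])
  show ?thesis unfolding signed_moment_def eq m by simp
qed


end
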